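(* Let $\mathcal{H}$ be a Hilbert space. Every power bounded operator $T\in\mathcal{B}(\mathcal{H})$ (i.e. $\sup_{n\ge0}\|T^n\|<\infty$) has a $3$-isometric lifting, which can be chosen to be expansive and analytic.
   Context: If $\mathcal{H}$ is a closed subspace of a Hilbert space $\mathcal{K}$ with orthogonal projection $P_{\mathcal{H}}$, an operator $S\in\mathcal{B}(\mathcal{K})$ is a lifting of $T\in\mathcal{B}(\mathcal{H})$ if $TP_{\mathcal{H}}=P_{\mathcal{H}}S$ (up to unitary identification of $\mathcal{H}$ with a subspace of $\mathcal{K}$). $S$ is $3$-isometric if $\sum_{j=0}^3 (-1)^j\binom{3}{j} S^{*j}S^j=0$. $S\in\mathcal{B}(\mathcal{K})$ is expansive if $\|Sx\|\ge\|x\|$ for all $x$, and analytic if $\bigcap_{n\ge0}S^n(\mathcal{K})=\{0\}$. *)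

theory Defs
  imports "HOL-Analysis.Analysis"
begin

text \<open>A complex Hilbert space is modelled as a real Hilbert space (type class
  real_inner + complete_space) together with a complex structure J (multiplication
  by the imaginary unit): a bounded real-linear isometry with J (J x) = - x.
  The real inner product is the real part of the complex one.\<close>

definition complex_structure :: "('a::real_inner \<Rightarrow> 'a) \<Rightarrow> bool" where
  "complex_structure J \<longleftrightarrow> bounded_linear J \<and> (\<forall>x. J (J x) = - x) \<and> (\<forall>x. norm (J x) = norm x)"

definition complex_bounded_operator :: "('a::real_inner \<Rightarrow> 'a) \<Rightarrow> ('a \<Rightarrow> 'a) \<Rightarrow> bool" where
  "complex_bounded_operator J T \<longleftrightarrow> bounded_linear T \<and> (\<forall>x. T (J x) = J (T x))"

definition power_bounded :: "('a::real_normed_vector \<Rightarrow> 'a) \<Rightarrow> bool" where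
  "power_bounded T \<longleftrightarrow> bdd_above (range (\<lambda>n. onorm (T ^^ n)))"

definition l2seq :: "(nat \<Rightarrow> 'a::real_inner) set" where
  "l2seq = {f. summable (\<lambda>n. (norm (f n))\<^sup>2)}"

definition l2inner :: "(nat \<Rightarrow> 'a::real_inner) \<Rightarrow> (nat \<Rightarrow> 'a) \<Rightarrow> real" where
  "l2inner f g = (\<Sum>n. inner (f n) (g n))"

definition l2norm :: "(nat \<Rightarrow> 'a::real_inner) \<Rightarrow> real" where
  "l2norm f = sqrt (l2inner f f)"

definition l2J :: "('a \<Rightarrow> 'a) \<Rightarrow> (nat \<Rightarrow> 'a) \<Rightarrow> (nat \<Rightarrow> 'a)" where
  "l2J J f = (\<lambda>n. J (f n))"

definition l2_operator :: "('a::real_inner \<Rightarrow> 'a) \<Rightarrow> ((nat \<Rightarrow> 'a) \<Rightarrow> (nat \<Rightarrow> 'a)) \<Rightarrow> bool" where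
  "l2_operator J S \<longleftrightarrow>
     S ` l2seq \<subseteq> l2seq \<and>
     (\<forall>x\<in>l2seq. \<forall>y\<in>l2seq. S (\<lambda>n. x n + y n) = (\<lambda>n. S x n + S y n)) \<and>
     (\<forall>x\<in>l2seq. \<forall>r::real. S (\<lambda>n. r *\<^sub>R x n) = (\<lambda>n. r *\<^sub>R S x n)) \<and>
     (\<forall>x\<in>l2seq. S (l2J J x) = l2J J (S x)) \<and>
     (\<exists>C. \<forall>x\<in>l2seq. l2norm (S x) \<le> C * l2norm x)"

text \<open>Hilbert-space adjoint of an operator on l^2(N; H) (meaningful on l2seq).\<close>

definition l2adj :: "((nat \<Rightarrow> 'a::real_inner) \<Rightarrow> (nat \<Rightarrow> 'a)) \<Rightarrow> (nat \<Rightarrow> 'a) \<Rightarrow> (nat \<Rightarrow> 'a)" where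
  "l2adj S y = (THE z. z \<in> l2seq \<and> (\<forall>x\<in>l2seq. l2inner (S x) y = l2inner x z))"

definition l2proj :: "(nat \<Rightarrow> 'a::real_inner) set \<Rightarrow> (nat \<Rightarrow> 'a) \<Rightarrow> (nat \<Rightarrow> 'a)" where
  "l2proj M k = (THE p. p \<in> M \<and> (\<forall>m\<in>M. l2inner (\<lambda>n. k n - p n) m = 0))"

definition three_isometric :: "((nat \<Rightarrow> 'a::real_inner) \<Rightarrow> (nat \<Rightarrow> 'a)) \<Rightarrow> bool" where
  "three_isometric S \<longleftrightarrow>
     (\<forall>x\<in>l2seq. (\<lambda>n. \<Sum>j\<le>3. ((-1) ^ j * real (3 choose j)) *\<^sub>R (((l2adj S) ^^ j) ((S ^^ j) x)) n) = (\<lambda>n. 0))"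

definition l2_expansive :: "((nat \<Rightarrow> 'a::real_inner) \<Rightarrow> (nat \<Rightarrow> 'a)) \<Rightarrow> bool" where
  "l2_expansive S \<longleftrightarrow> (\<forall>x\<in>l2seq. l2norm (S x) \<ge> l2norm x)"

definition l2_analytic :: "((nat \<Rightarrow> 'a::real_inner) \<Rightarrow> (nat \<Rightarrow> 'a)) \<Rightarrow> bool" where
  "l2_analytic S \<longleftrightarrow> (\<Inter>n. (S ^^ n) ` l2seq) = {(\<lambda>n. 0)}"

text \<open>S on K = l^2(N; H) is a lifting of T on H, where H is identified with the
  subspace V(H) of K through the complex-linear isometry V: T P_H = P_H S, i.e.
  V (T (V^{-1} (P_H k))) = P_H (S k) for all k in K.\<close>

definition l2_lifting :: "('a::real_inner \<Rightarrow> 'a) \<Rightarrow> ('a \<Rightarrow> 'a) \<Rightarrow> ('a \<Rightarrow> (nat \<Rightarrow> 'a))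
    \<Rightarrow> ((nat \<Rightarrow> 'a) \<Rightarrow> (nat \<Rightarrow> 'a)) \<Rightarrow> bool" where
  "l2_lifting J T V S \<longleftrightarrow>
     range V \<subseteq> l2seq \<and>
     (\<forall>x y. V (x + y) = (\<lambda>n. V x n + V y n)) \<and>
     (\<forall>x r. V (r *\<^sub>R x) = (\<lambda>n. r *\<^sub>R V x n)) \<and>
     (\<forall>x. V (J x) = l2J J (V x)) \<and>
     (\<forall>x. l2norm (V x) = norm x) \<and>
     (\<forall>k\<in>l2seq. V (T (inv V (l2proj (range V) k))) = l2proj (range V) (S k))"

end

theory Submission imports Defs begin

lemma riesz_rep:
  fixes f :: "'a::{real_inner,complete_space} \<Rightarrow> real"
  assumes bl: "bounded_linear f"
  shows "\<exists>z. \<forall>x. f x = inner x z"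
proof -
  interpret f: bounded_linear f by fact
  obtain K where K: "\<And>x. norm (f x) \<le> norm x * K" and Kpos: "K > 0"
    using f.pos_bounded by blast
  define \<phi> where "\<phi> x = (norm x)\<^sup>2 / 2 - f x" for x
  have lb: "\<phi> x \<ge> - (K\<^sup>2) / 2" for x
  proof -
    have "f x \<le> norm x * K" using K[of x] by auto
    moreover have "(norm x - K)\<^sup>2 \<ge> 0" by simp
    ultimately show ?thesis unfolding \<phi>_def by (simp add: power2_eq_square algebra_simps)
  qed
  define m where "m = Inf (range \<phi>)"
  have bdd: "bdd_below (range \<phi>)" using lb by (intro bdd_belowI2[where m="- (K\<^sup>2 / 2)"]) auto
  have m_le: "m \<le> \<phi> y" for y unfolding m_def by (rule cInf_lower[OF _ bdd]) auto
  have "\<exists>x. \<phi> x < m + 1 / (real k + 1)" for k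
  proof -
    have "m < m + 1 / (real k + 1)" by simp
    then obtain y where "y \<in> range \<phi>" "y < m + 1 / (real k + 1)"
      unfolding m_def using cInf_lessD[of "range \<phi>"] by blast
    then show ?thesis by auto
  qed
  then obtain x where x: "\<And>k. \<phi> (x k) < m + 1 / (real k + 1)" by metis
  have para: "(norm (a - b))\<^sup>2 = 4 * (\<phi> a + \<phi> b - 2 * \<phi> ((1/2) *\<^sub>R (a + b)))" for a b
  proof -
    have "f ((1/2) *\<^sub>R (a + b)) = (f a + f b) / 2" by (simp add: f.scaleR f.add)
    moreover have "(norm ((1/2) *\<^sub>R (a + b)))\<^sup>2 = ((norm a)\<^sup>2 + (norm b)\<^sup>2 + 2 * inner a b) / 4"
      by (simp add: power2_norm_eq_inner inner_add_left inner_add_right inner_commute algebra_simps)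
    moreover have "(norm (a - b))\<^sup>2 = (norm a)\<^sup>2 + (norm b)\<^sup>2 - 2 * inner a b"
      by (simp add: power2_norm_eq_inner inner_diff_left inner_diff_right inner_commute algebra_simps)
    ultimately show ?thesis unfolding \<phi>_def by (simp add: algebra_simps)
  qed
  have dist_bound: "(norm (x i - x j))\<^sup>2 \<le> 4 * (1 / (real i + 1) + 1 / (real j + 1))" for i j
  proof -
    have "m \<le> \<phi> ((1/2) *\<^sub>R (x i + x j))" by (rule m_le)
    then have "\<phi> (x i) + \<phi> (x j) - 2 * \<phi> ((1/2) *\<^sub>R (x i + x j)) \<le> 1 / (real i + 1) + 1 / (real j + 1)"
      using x[of i] x[of j] by linarith
    then show ?thesis by (simp only: para[of "x i" "x j"]) simp
  qed
  have "Cauchy x"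
  proof (rule metric_CauchyI)
    fix e :: real assume e: "e > 0"
    obtain N :: nat where N: "real N > 8 / e\<^sup>2" using reals_Archimedean2 by blast
    have "dist (x i) (x j) < e" if "i \<ge> N" "j \<ge> N" for i j
    proof -
      have Npos: "real N > 0" using N e by (smt (verit) divide_pos_pos zero_less_power)
      have "1 / (real i + 1) < 1 / real N" using that Npos by (simp add: frac_less2)
      moreover have "1 / (real j + 1) < 1 / real N" using that Npos by (simp add: frac_less2)
      ultimately have "(norm (x i - x j))\<^sup>2 < 8 / real N" using dist_bound[of i j] by simp
      also have "8 / real N < e\<^sup>2" using N e Npos by (simp add: field_simps)
      finally have "(norm (x i - x j))\<^sup>2 < e\<^sup>2" .
      then have "norm (x i - x j) < e" using e by (simp add: power_less_imp_less_base)
      then show ?thesis by (simp add: dist_norm)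
    qed
    then show "\<exists>M. \<forall>m\<ge>M. \<forall>n\<ge>M. dist (x m) (x n) < e" by blast
  qed
  then obtain z where lim: "x \<longlonglongrightarrow> z" using convergent_eq_Cauchy by blast
  have cont: "continuous_on UNIV \<phi>" unfolding \<phi>_def
    by (intro continuous_intros f.continuous_on) auto
  have zmin: "\<phi> z \<le> \<phi> y" for y
  proof -
    have "(\<lambda>k. \<phi> (x k)) \<longlonglongrightarrow> \<phi> z"
      using cont lim by (metis UNIV_I
          continuous_on_tendsto_compose eventually_sequentiallyI)
    moreover have "(\<lambda>k. \<phi> y + 1 / (real k + 1)) \<longlonglongrightarrow> \<phi> y + 0"
    proof -
      have "(\<lambda>k. 1 / (real k + 1)) \<longlonglongrightarrow> 0"
        using LIMSEQ_inverse_real_of_nat by (simp add: inverse_eq_divide add.commute)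
      then show ?thesis by (intro tendsto_intros)
    qed
    moreover have "\<phi> (x k) \<le> \<phi> y + 1 / (real k + 1)" for k using x[of k] m_le[of y] by linarith
    ultimately show ?thesis by (simp add: LIMSEQ_le)
  qed
  have "f v = inner v z" for v
  proof -
    define a where "a = inner z v - f v"
    define b where "b = (norm v)\<^sup>2 / 2"
    have b0: "b \<ge> 0" unfolding b_def by simp
    have key: "t * a + t\<^sup>2 * b \<ge> 0" for t
    proof -
      have "\<phi> z \<le> \<phi> (z + t *\<^sub>R v)" by (rule zmin)
      moreover have "(norm (z + t *\<^sub>R v))\<^sup>2 = (norm z)\<^sup>2 + 2 * t * inner z v + t\<^sup>2 * (norm v)\<^sup>2"
        by (simp only: power2_norm_eq_inner) (simp add: inner_add_left inner_add_right inner_commute algebra_simps power2_eq_square)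
      ultimately show ?thesis unfolding \<phi>_def a_def b_def by (simp add: f.add f.scaleR algebra_simps)
    qed
    have "a = 0"
    proof (rule ccontr)
      assume "a \<noteq> 0"
      define t where "t = - a / (2 * b + 1)"
      have pos: "2 * b + 1 > 0" using b0 by simp
      have "t * a + t\<^sup>2 * b = - a\<^sup>2 * (b + 1) / (2 * b + 1)\<^sup>2"
        unfolding t_def using pos by (simp add: divide_simps power2_eq_square) (simp add: algebra_simps)
      also have "... < 0" using \<open>a \<noteq> 0\<close> b0 pos by (simp add: divide_neg_pos)
      finally show False using key[of t] by simp
    qed
    then show ?thesis unfolding a_def by (simp add: inner_commute)
  qed
  then show ?thesis by blast
qed


definition adjop :: "('a::{real_inner,complete_space} \<Rightarrow> 'a) \<Rightarrow> 'a \<Rightarrow> 'a" where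
  "adjop T y = (SOME z. \<forall>x. inner (T x) y = inner x z)"

lemma adjop_inner:
  fixes T :: "'a::{real_inner,complete_space} \<Rightarrow> 'a"
  assumes "bounded_linear T"
  shows "inner (T x) y = inner x (adjop T y)"
proof -
  have "bounded_linear (\<lambda>x. inner (T x) y)"
    using bounded_linear_compose[OF bounded_linear_inner_left assms] by simp
  then obtain z where "\<forall>x. inner (T x) y = inner x z" using riesz_rep by blast
  then have "\<forall>x. inner (T x) y = inner x (adjop T y)"
    unfolding adjop_def by (rule someI)
  then show ?thesis by blast
qed

lemma inner_eq_imp_eq:
  fixes z w :: "'a::real_inner"
  assumes "\<And>x. inner x z = inner x w"
  shows "z = w"
proof -
  have "inner (z - w) (z - w) = 0"
    using assms[of "z - w"] by (simp add: inner_diff_right)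
  then show ?thesis by simp
qed

lemma adjop_bound:
  fixes T :: "'a::{real_inner,complete_space} \<Rightarrow> 'a"
  assumes "bounded_linear T" and "K \<ge> 0" and "\<And>x. norm (T x) \<le> K * norm x"
  shows "norm (adjop T y) \<le> K * norm y"
proof -
  define a where "a = adjop T y"
  have "(norm a)\<^sup>2 = inner (T a) y"
    unfolding a_def by (simp add: adjop_inner[OF assms(1)] power2_norm_eq_inner)
  also have "\<dots> \<le> norm (T a) * norm y" by (rule Cauchy_Schwarz_ineq2[THEN abs_le_D1])
  also have "\<dots> \<le> K * norm a * norm y" using assms(3)[of a] by (simp add: mult_right_mono)
  finally have *: "norm a * norm a \<le> norm a * (K * norm y)" by (simp add: power2_eq_square algebra_simps)
  show ?thesis
  proof (cases "norm a = 0")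
    case True then show ?thesis using assms(2) unfolding a_def by simp
  next
    case False then have "norm a > 0" by simp
    with * show ?thesis unfolding a_def by simp
  qed
qed

lemma adjop_bl:
  fixes T :: "'a::{real_inner,complete_space} \<Rightarrow> 'a"
  assumes bl: "bounded_linear T"
  shows "bounded_linear (adjop T)"
proof -
  obtain K where K: "\<And>x. norm (T x) \<le> norm x * K" "K > 0"
    using bounded_linear.pos_bounded[OF bl] by blast
  show ?thesis
  proof (rule bounded_linear_intro)
    fix y z
    show "adjop T (y + z) = adjop T y + adjop T z"
      by (rule inner_eq_imp_eq) (simp add: adjop_inner[OF bl, symmetric] inner_add_right)
  next
    fix r y
    show "adjop T (r *\<^sub>R y) = r *\<^sub>R adjop T y"
      by (rule inner_eq_imp_eq) (simp add: adjop_inner[OF bl, symmetric])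
  next
    fix y
    show "norm (adjop T y) \<le> norm y * K"
      using adjop_bound[OF bl, of K y] K by (simp add: mult.commute)
  qed
qed

lemma funpow_bl: "bounded_linear (f::'a::real_normed_vector \<Rightarrow> 'a) \<Longrightarrow> bounded_linear (f ^^ n)"
proof (induction n)
  case 0 then show ?case using bounded_linear_ident by (simp add: id_def)
next
  case (Suc n) then show ?case using bounded_linear_compose[of f "f ^^ n"] by (simp add: comp_def)
qed

lemma adjop_pow_inner:
  fixes T :: "'a::{real_inner,complete_space} \<Rightarrow> 'a"
  assumes "\<And>x y. inner (T x) y = inner x (A y)"
  shows "inner ((T ^^ n) x) y = inner x ((A ^^ n) y)"
proof (induction n arbitrary: x)
  case 0 then show ?case by simp
next
  case (Suc n)
  have "inner ((T ^^ Suc n) x) y = inner ((T ^^ n) (T x)) y" by (simp only: funpow_Suc_right comp_def)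
  also have "\<dots> = inner (T x) ((A ^^ n) y)" by (rule Suc.IH)
  also have "\<dots> = inner x ((A ^^ Suc n) y)" by (simp add: assms)
  finally show ?case .
qed



lemma summable_norm_cancel_gen:
  fixes f :: "nat \<Rightarrow> 'b::real_normed_vector"
  assumes compl: "\<And>X::nat \<Rightarrow> 'b. Cauchy X \<Longrightarrow> convergent X"
    and sn: "summable (\<lambda>n. norm (f n))"
  shows "summable f"
proof -
  from sn have r: "\<forall>e>0. \<exists>N. \<forall>m\<ge>N. \<forall>n. norm (sum (\<lambda>k. norm (f k)) {m..<n}) < e"
    by (simp only: summable_Cauchy)
  have "Cauchy (\<lambda>n. \<Sum>i<n. f i)"
    unfolding Cauchy_iff
  proof clarify
    fix e :: real
    assume "0 < e"
    with r obtain N where N: "\<And>m n. m \<ge> N \<Longrightarrow> norm (sum (\<lambda>k. norm (f k)) {m..<n}) < e"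
      by blast
    have N': "norm (sum f {m..<n}) < e" if "m \<ge> N" for m n
    proof -
      have "norm (sum f {m..<n}) \<le> sum (\<lambda>k. norm (f k)) {m..<n}" by (rule norm_sum)
      also have "\<dots> = norm (sum (\<lambda>k. norm (f k)) {m..<n})"
        by (simp add: sum_nonneg)
      also have "\<dots> < e" using N[OF that] .
      finally show ?thesis .
    qed
    have "norm (sum f {..<m} - sum f {..<n}) < e" if "m\<ge>N" "n\<ge>N" for m n
    proof (cases m n rule: linorder_class.le_cases)
      assume "m \<le> n"
      then show ?thesis
        by (metis N' finite_lessThan lessThan_minus_lessThan lessThan_subset_iff norm_minus_commute sum_diff \<open>m\<ge>N\<close>)
    next
      assume "n \<le> m"
      then show ?thesis
        by (metis N' finite_lessThan lessThan_minus_lessThan lessThan_subset_iff sum_diff \<open>n\<ge>N\<close>)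
    qed
    then show "\<exists>M. \<forall>m\<ge>M. \<forall>n\<ge>M. norm (sum f {..<m} - sum f {..<n}) < e"
      by blast
  qed
  then show ?thesis unfolding summable_iff_convergent by (rule compl)
qed

lemma summable_norm_gen:
  fixes f :: "nat \<Rightarrow> 'b::real_normed_vector"
  assumes "summable f" and sn: "summable (\<lambda>n. norm (f n))"
  shows "norm (suminf f) \<le> (\<Sum>n. norm (f n))"
proof -
  have "(\<lambda>n. \<Sum>i<n. f i) \<longlonglongrightarrow> suminf f"
    using summable_LIMSEQ[OF assms(1)] .
  then have "(\<lambda>n. norm (\<Sum>i<n. f i)) \<longlonglongrightarrow> norm (suminf f)" by (rule tendsto_norm)
  moreover have "norm (\<Sum>i<n. f i) \<le> (\<Sum>n. norm (f n))" for n
  proof -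
    have "norm (\<Sum>i<n. f i) \<le> (\<Sum>i<n. norm (f i))" by (rule norm_sum)
    also have "\<dots> \<le> (\<Sum>n. norm (f n))" by (rule sum_le_suminf[OF sn]) auto
    finally show ?thesis .
  qed
  ultimately show ?thesis by (intro LIMSEQ_le_const2) auto
qed

lemma blinfun_Cauchy_conv:
  fixes X::"nat \<Rightarrow> 'a::real_normed_vector \<Rightarrow>\<^sub>L 'b::{real_normed_vector,complete_space}"
  assumes "Cauchy X"
  shows "convergent X"
proof -
  {
    fix x::'a
    {
      fix x::'a
      assume "norm x \<le> 1"
      have "Cauchy (\<lambda>n. X n x)"
      proof (rule CauchyI)
        fix e::real
        assume "0 < e"
        from CauchyD[OF \<open>Cauchy X\<close> \<open>0 < e\<close>] obtain M
          where M: "\<And>m n. m \<ge> M \<Longrightarrow> n \<ge> M \<Longrightarrow> norm (X m - X n) < e"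
          by auto
        show "\<exists>M. \<forall>m\<ge>M. \<forall>n\<ge>M. norm (X m x - X n x) < e"
        proof (safe intro!: exI[where x=M])
          fix m n
          assume le: "M \<le> m" "M \<le> n"
          have "norm (X m x - X n x) = norm ((X m - X n) x)"
            by (simp add: blinfun.bilinear_simps)
          also have "\<dots> \<le> norm (X m - X n) * norm x"
             by (rule norm_blinfun)
          also have "\<dots> \<le> norm (X m - X n) * 1"
            using \<open>norm x \<le> 1\<close> norm_ge_zero by (rule mult_left_mono)
          also have "\<dots> = norm (X m - X n)" by simp
          also have "\<dots> < e" using le by fact
          finally show "norm (X m x - X n x) < e" .
        qed
      qed
      hence "convergent (\<lambda>n. X n x)"
        by (metis Cauchy_convergent_iff)
    } note convergent_norm1 = this
    define y where "y = x /\<^sub>R norm x"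
    have y: "norm y \<le> 1" and xy: "x = norm x *\<^sub>R y"
      by (simp_all add: y_def inverse_eq_divide)
    have "convergent (\<lambda>n. norm x *\<^sub>R X n y)"
      by (intro bounded_bilinear.convergent[OF bounded_bilinear_scaleR] convergent_const
        convergent_norm1 y)
    also have "(\<lambda>n. norm x *\<^sub>R X n y) = (\<lambda>n. X n x)"
      by (subst xy) (simp add: blinfun.bilinear_simps)
    finally have "convergent (\<lambda>n. X n x)" .
  }
  then obtain v where v: "\<And>x. (\<lambda>n. X n x) \<longlonglongrightarrow> v x"
    unfolding convergent_def
    by metis
  have "Cauchy (\<lambda>n. norm (X n))"
  proof (rule CauchyI)
    fix e::real
    assume "e > 0"
    from CauchyD[OF \<open>Cauchy X\<close> \<open>0 < e\<close>] obtain M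
      where M: "\<And>m n. m \<ge> M \<Longrightarrow> n \<ge> M \<Longrightarrow> norm (X m - X n) < e"
      by auto
    show "\<exists>M. \<forall>m\<ge>M. \<forall>n\<ge>M. norm (norm (X m) - norm (X n)) < e"
    proof (safe intro!: exI[where x=M])
      fix m n assume mn: "m \<ge> M" "n \<ge> M"
      have "norm (norm (X m) - norm (X n)) \<le> norm (X m - X n)"
        by (metis norm_triangle_ineq3 real_norm_def)
      also have "\<dots> < e" using mn by fact
      finally show "norm (norm (X m) - norm (X n)) < e" .
    qed
  qed
  then obtain K where K: "(\<lambda>n. norm (X n)) \<longlonglongrightarrow> K"
    unfolding Cauchy_convergent_iff convergent_def
    by metis
  have "bounded_linear v"
  proof
    fix x y and r::real
    from tendsto_add[OF v[of x] v [of y]] v[of "x + y", unfolded blinfun.bilinear_simps]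
      tendsto_scaleR[OF tendsto_const[of r] v[of x]] v[of "r *\<^sub>R x", unfolded blinfun.bilinear_simps]
    show "v (x + y) = v x + v y" "v (r *\<^sub>R x) = r *\<^sub>R v x"
      by (metis (poly_guards_query) LIMSEQ_unique)+
    show "\<exists>K. \<forall>x. norm (v x) \<le> norm x * K"
    proof (safe intro!: exI[where x=K])
      fix x
      have "norm (v x) \<le> K * norm x"
        by (rule tendsto_le[OF _ tendsto_mult[OF K tendsto_const] tendsto_norm[OF v]])
          (auto simp: norm_blinfun)
      thus "norm (v x) \<le> norm x * K"
        by (simp add: ac_simps)
    qed
  qed
  hence Bv: "\<And>x. (\<lambda>n. X n x) \<longlonglongrightarrow> Blinfun v x"
    by (auto simp: bounded_linear_Blinfun_apply v)
  have "X \<longlonglongrightarrow> Blinfun v"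
  proof (rule LIMSEQ_I)
    fix r::real assume "r > 0"
    define r' where "r' = r / 2"
    have "0 < r'" "r' < r" using \<open>r > 0\<close> by (simp_all add: r'_def)
    from CauchyD[OF \<open>Cauchy X\<close> \<open>r' > 0\<close>]
    obtain M where M: "\<And>m n. m \<ge> M \<Longrightarrow> n \<ge> M \<Longrightarrow> norm (X m - X n) < r'"
      by metis
    show "\<exists>no. \<forall>n\<ge>no. norm (X n - Blinfun v) < r"
    proof (safe intro!: exI[where x=M])
      fix n assume n: "M \<le> n"
      have "norm (X n - Blinfun v) \<le> r'"
      proof (rule norm_blinfun_bound)
        fix x
        have "eventually (\<lambda>m. m \<ge> M) sequentially"
          by (metis eventually_ge_at_top)
        hence ev_le: "eventually (\<lambda>m. norm (X n x - X m x) \<le> r' * norm x) sequentially"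
        proof eventually_elim
          case (elim m)
          have "norm (X n x - X m x) = norm ((X n - X m) x)"
            by (simp add: blinfun.bilinear_simps)
          also have "\<dots> \<le> norm ((X n - X m)) * norm x"
            by (rule norm_blinfun)
          also have "\<dots> \<le> r' * norm x"
            using M[OF n elim] by (simp add: mult_right_mono)
          finally show ?case .
        qed
        have tendsto_v: "(\<lambda>m. norm (X n x - X m x)) \<longlonglongrightarrow> norm (X n x - Blinfun v x)"
          by (auto intro!: tendsto_intros Bv)
        show "norm ((X n - Blinfun v) x) \<le> r' * norm x"
          by (auto intro!: tendsto_upperbound tendsto_v ev_le simp: blinfun.bilinear_simps)
      qed (simp add: \<open>0 < r'\<close> less_imp_le)
      thus "norm (X n - Blinfun v) < r"
        by (metis \<open>r' < r\<close> le_less_trans)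
    qed
  qed
  thus "convergent X"
    by (rule convergentI)
qed


definition Tb :: "('a::real_normed_vector \<Rightarrow> 'a) \<Rightarrow> nat \<Rightarrow> ('a \<Rightarrow>\<^sub>L 'a)" where
  "Tb T n = Blinfun (T ^^ n)"

definition trm :: "('a::real_normed_vector \<Rightarrow> 'a) \<Rightarrow> ('a \<Rightarrow> 'a) \<Rightarrow> (nat \<Rightarrow> real) \<Rightarrow> ('a \<Rightarrow>\<^sub>L 'a) \<Rightarrow> nat \<Rightarrow> ('a \<Rightarrow>\<^sub>L 'a)" where
  "trm T A q Z n = (1 / q (Suc n)) *\<^sub>R (Tb T (Suc n) o\<^sub>L Z o\<^sub>L Tb A (Suc n))"

definition PhiOp :: "('a::real_normed_vector \<Rightarrow> 'a) \<Rightarrow> ('a \<Rightarrow> 'a) \<Rightarrow> (nat \<Rightarrow> real) \<Rightarrow> ('a \<Rightarrow>\<^sub>L 'a) \<Rightarrow> ('a \<Rightarrow>\<^sub>L 'a)" where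
  "PhiOp T A q Z = (\<Sum>n. trm T A q Z n)"

definition GOp :: "('a::real_normed_vector \<Rightarrow> 'a) \<Rightarrow> ('a \<Rightarrow> 'a) \<Rightarrow> (nat \<Rightarrow> real) \<Rightarrow> ('a \<Rightarrow>\<^sub>L 'a) \<Rightarrow> ('a \<Rightarrow>\<^sub>L 'a)" where
  "GOp T A q Y = (1/2) *\<^sub>R ((Y o\<^sub>L Y) + PhiOp T A q ((id_blinfun - Y) o\<^sub>L (id_blinfun - Y)))"

definition sa :: "('a::real_inner \<Rightarrow>\<^sub>L 'a) \<Rightarrow> bool" where
  "sa Z \<longleftrightarrow> (\<forall>x y. inner (Z x) y = inner x (Z y))"

definition cJ :: "('a::real_normed_vector \<Rightarrow> 'a) \<Rightarrow> ('a \<Rightarrow>\<^sub>L 'a) \<Rightarrow> bool" where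
  "cJ J Z \<longleftrightarrow> (\<forall>x. Z (J x) = J (Z x))"

lemma funpow_comm:
  assumes "\<And>x. T (J x) = J (T x)"
  shows "(T ^^ n) (J x) = J ((T ^^ n) x)"
  by (induction n) (simp_all add: assms)

lemma blin_norm_id_minus: "norm (id_blinfun - Y) \<le> 1 + norm (Y :: 'a::real_normed_vector \<Rightarrow>\<^sub>L 'a)"
  using norm_triangle_ineq4[of id_blinfun Y] norm_blinfun_id_le[where 'a='a] by linarith

lemma sa_sq: "sa Z \<Longrightarrow> sa (Z o\<^sub>L Z)"
  unfolding sa_def by simp

lemma sa_I_minus: "sa Z \<Longrightarrow> sa (id_blinfun - Z)"
  unfolding sa_def by (simp add: blinfun.diff_left inner_diff_left inner_diff_right)

definition Cset :: "('a::real_inner \<Rightarrow> 'a) \<Rightarrow> ('a \<Rightarrow>\<^sub>L 'a) set" where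
  "Cset J = {Y. norm Y \<le> 1/4 \<and> sa Y \<and> cJ J Y}"


context
  fixes T A J :: "'a::{real_inner,complete_space} \<Rightarrow> 'a" and M :: real and q :: "nat \<Rightarrow> real"
  assumes blT: "bounded_linear T" and blA: "bounded_linear A" and blJ: "bounded_linear J"
    and adj: "\<And>x y. inner (T x) y = inner x (A y)"
    and TJ: "\<And>x. T (J x) = J (T x)" and AJ: "\<And>x. A (J x) = J (A x)"
    and TM: "\<And>n x. norm ((T ^^ n) x) \<le> M * norm x"
    and AM: "\<And>n x. norm ((A ^^ n) x) \<le> M * norm x"
    and M0: "M \<ge> 0"
    and qpos: "\<And>n. q n > 0" and q0: "q 0 = 1"
    and qsum: "summable (\<lambda>n. 1 / q (Suc n))"
    and small: "M\<^sup>2 * (\<Sum>n. 1 / q (Suc n)) \<le> 1/10"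
begin

lemma Tb_apply: "blinfun_apply (Tb T n) = T ^^ n"
  unfolding Tb_def by (rule bounded_linear_Blinfun_apply[OF funpow_bl[OF blT]])

lemma Ab_apply: "blinfun_apply (Tb A n) = A ^^ n"
  unfolding Tb_def by (rule bounded_linear_Blinfun_apply[OF funpow_bl[OF blA]])

lemma norm_Tb: "norm (Tb T n) \<le> M"
  by (rule norm_blinfun_bound) (use M0 TM in \<open>auto simp: Tb_apply\<close>)

lemma norm_Ab: "norm (Tb A n) \<le> M"
  by (rule norm_blinfun_bound) (use M0 AM in \<open>auto simp: Ab_apply\<close>)

lemma trm_apply: "blinfun_apply (trm T A q Z n) x = (1 / q (Suc n)) *\<^sub>R (T ^^ Suc n) (Z ((A ^^ Suc n) x))"
  unfolding trm_def blinfun.scaleR_left blinfun_apply_blinfun_compose Tb_apply Ab_apply by (rule refl)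

lemma J_scale: "J (r *\<^sub>R x) = r *\<^sub>R J x"
  by (rule linear.scaleR[OF bounded_linear.linear[OF blJ]])

lemma norm_trm: "norm (trm T A q Z n) \<le> (M\<^sup>2 * norm Z) * (1 / q (Suc n))"
proof -
  have "norm (Tb T (Suc n) o\<^sub>L Z o\<^sub>L Tb A (Suc n)) \<le> norm (Tb T (Suc n) o\<^sub>L Z) * norm (Tb A (Suc n))"
    by (rule norm_blinfun_compose)
  also have "\<dots> \<le> (norm (Tb T (Suc n)) * norm Z) * norm (Tb A (Suc n))"
    by (intro mult_right_mono norm_blinfun_compose) simp
  also have "\<dots> \<le> (M * norm Z) * M"
    by (intro mult_mono norm_Tb norm_Ab) (use M0 in auto)
  finally have *: "norm (Tb T (Suc n) o\<^sub>L Z o\<^sub>L Tb A (Suc n)) \<le> M\<^sup>2 * norm Z"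
    by (simp add: power2_eq_square algebra_simps)
  have "norm (trm T A q Z n) = (1 / q (Suc n)) * norm (Tb T (Suc n) o\<^sub>L Z o\<^sub>L Tb A (Suc n))"
    unfolding trm_def using qpos[of "Suc n"] by simp
  also have "\<dots> \<le> (1 / q (Suc n)) * (M\<^sup>2 * norm Z)"
    using * qpos[of "Suc n"] by (intro mult_left_mono) auto
  finally show ?thesis by (simp add: mult.commute)
qed

lemma summable_norm_trm: "summable (\<lambda>n. norm (trm T A q Z n))"
  by (rule summable_comparison_test[OF _ summable_mult[OF qsum, of "M\<^sup>2 * norm Z"]])
     (use norm_trm in auto)

lemma summable_trm: "summable (trm T A q Z)"
  by (rule summable_norm_cancel_gen[OF blinfun_Cauchy_conv summable_norm_trm])

lemma norm_Phi: "norm (PhiOp T A q Z) \<le> (M\<^sup>2 * (\<Sum>n. 1 / q (Suc n))) * norm Z"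
proof -
  have "norm (PhiOp T A q Z) \<le> (\<Sum>n. norm (trm T A q Z n))"
    unfolding PhiOp_def by (rule summable_norm_gen[OF summable_trm summable_norm_trm])
  also have "\<dots> \<le> (\<Sum>n. (M\<^sup>2 * norm Z) * (1 / q (Suc n)))"
    by (rule suminf_le[OF norm_trm summable_norm_trm summable_mult[OF qsum]])
  also have "\<dots> = (M\<^sup>2 * norm Z) * (\<Sum>n. 1 / q (Suc n))"
    by (rule suminf_mult[OF qsum])
  finally show ?thesis by (simp add: algebra_simps)
qed

lemma Phi_apply: "blinfun_apply (PhiOp T A q Z) x = (\<Sum>n. blinfun_apply (trm T A q Z n) x)"
  unfolding PhiOp_def by (rule bounded_linear.suminf[OF blinfun.bounded_linear_left summable_trm])

lemma summable_trm_apply: "summable (\<lambda>n. blinfun_apply (trm T A q Z n) x)"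
  by (rule bounded_linear.summable[OF blinfun.bounded_linear_left summable_trm])

lemma Phi_diff: "PhiOp T A q Z1 - PhiOp T A q Z2 = PhiOp T A q (Z1 - Z2)"
proof -
  have "trm T A q Z1 n - trm T A q Z2 n = trm T A q (Z1 - Z2) n" for n
    unfolding trm_def
    by (simp add: bounded_bilinear.diff_left[OF bounded_bilinear_blinfun_compose]
        bounded_bilinear.diff_right[OF bounded_bilinear_blinfun_compose] scaleR_diff_right)
  then show ?thesis unfolding PhiOp_def using suminf_diff[OF summable_trm summable_trm] by simp
qed

lemma T_adj_pow: "inner ((T ^^ n) u) v = inner u ((A ^^ n) v)"
  by (rule adjop_pow_inner[OF adj])

lemma A_adj_pow: "inner ((A ^^ n) u) v = inner u ((T ^^ n) v)"
  using T_adj_pow[of n v u] by (simp add: inner_commute)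

lemma Phi_sa: "sa Z \<Longrightarrow> sa (PhiOp T A q Z)"
  unfolding sa_def
proof (intro allI)
  fix x y assume Z: "\<forall>x y. inner (Z x) y = inner x (Z y)"
  have t: "inner (blinfun_apply (trm T A q Z n) x) y = inner x (blinfun_apply (trm T A q Z n) y)" for n
  proof -
    have "inner ((T^^Suc n) (Z ((A^^Suc n) x))) y = inner (Z ((A^^Suc n) x)) ((A^^Suc n) y)"
      by (rule T_adj_pow)
    also have "\<dots> = inner ((A^^Suc n) x) (Z ((A^^Suc n) y))" using Z by blast
    also have "\<dots> = inner x ((T^^Suc n) (Z ((A^^Suc n) y)))" by (rule A_adj_pow)
    finally show ?thesis unfolding trm_apply inner_scaleR_left inner_scaleR_right by simp
  qed
  have "inner (blinfun_apply (PhiOp T A q Z) x) y = (\<Sum>n. inner (blinfun_apply (trm T A q Z n) x) y)"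
    by (simp add: Phi_apply bounded_linear.suminf[OF bounded_linear_inner_left summable_trm_apply])
  also have "\<dots> = (\<Sum>n. inner x (blinfun_apply (trm T A q Z n) y))" by (simp add: t)
  also have "\<dots> = inner x (blinfun_apply (PhiOp T A q Z) y)"
    by (simp add: Phi_apply bounded_linear.suminf[OF bounded_linear_inner_right summable_trm_apply])
  finally show "inner (blinfun_apply (PhiOp T A q Z) x) y = inner x (blinfun_apply (PhiOp T A q Z) y)" .
qed

lemma Phi_cJ: "cJ J Z \<Longrightarrow> cJ J (PhiOp T A q Z)"
  unfolding cJ_def
proof (intro allI)
  fix x assume Z: "\<forall>x. Z (J x) = J (Z x)"
  have t: "blinfun_apply (trm T A q Z n) (J x) = J (blinfun_apply (trm T A q Z n) x)" for n
    unfolding trm_apply funpow_comm[of A J, OF AJ] funpow_comm[of T J, OF TJ] Z[rule_format] J_scale by (rule refl)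
  show "blinfun_apply (PhiOp T A q Z) (J x) = J (blinfun_apply (PhiOp T A q Z) x)"
    by (simp add: Phi_apply t bounded_linear.suminf[OF blJ summable_trm_apply])
qed


lemma G_in: assumes "Y \<in> Cset J" shows "GOp T A q Y \<in> Cset J"
proof -
  let ?e = "M\<^sup>2 * (\<Sum>n. 1 / q (Suc n))"
  let ?P = "(id_blinfun - Y) o\<^sub>L (id_blinfun - Y)"
  have Y: "norm Y \<le> 1/4" "sa Y" "cJ J Y" using assms unfolding Cset_def by auto
  have e0: "?e \<ge> 0" using qpos by (intro mult_nonneg_nonneg suminf_nonneg qsum) (auto intro: less_imp_le)
  have nI: "norm (id_blinfun - Y) \<le> 5/4" using blin_norm_id_minus[of Y] Y(1) by linarith
  have nP: "norm ?P \<le> 25/16"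
  proof -
    have "norm ?P \<le> norm (id_blinfun - Y) * norm (id_blinfun - Y)" by (rule norm_blinfun_compose)
    also have "\<dots> \<le> (5/4) * (5/4)" by (intro mult_mono nI) auto
    finally show ?thesis by simp
  qed
  have nYY: "norm (Y o\<^sub>L Y) \<le> 1/16"
  proof -
    have "norm (Y o\<^sub>L Y) \<le> norm Y * norm Y" by (rule norm_blinfun_compose)
    also have "\<dots> \<le> (1/4) * (1/4)" by (intro mult_mono Y(1)) auto
    finally show ?thesis by simp
  qed
  have nPhi: "norm (PhiOp T A q ?P) \<le> 1/10 * (25/16)"
  proof -
    have "norm (PhiOp T A q ?P) \<le> ?e * norm ?P" by (rule norm_Phi)
    also have "\<dots> \<le> 1/10 * (25/16)" using small e0 nP by (intro mult_mono) auto
    finally show ?thesis .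
  qed
  have "norm (GOp T A q Y) \<le> 1/2 * (norm (Y o\<^sub>L Y) + norm (PhiOp T A q ?P))"
    unfolding GOp_def using norm_triangle_ineq[of "Y o\<^sub>L Y" "PhiOp T A q ?P"] by (simp add: mult_left_mono)
  also have "\<dots> \<le> 1/4" using nYY nPhi by simp
  finally have n: "norm (GOp T A q Y) \<le> 1/4" .
  have saP: "sa ?P" by (rule sa_sq[OF sa_I_minus[OF Y(2)]])
  have saYY: "sa (Y o\<^sub>L Y)" using Y(2) unfolding sa_def by simp
  have sG: "sa (GOp T A q Y)" using Phi_sa[OF saP] saYY unfolding sa_def GOp_def
    by (simp add: blinfun.add_left blinfun.scaleR_left inner_add_left inner_add_right)
  have Jdiff: "J (a - b) = J a - J b" for a b by (rule linear_diff[OF bounded_linear.linear[OF blJ]])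
  have Jadd: "J (a + b) = J a + J b" for a b by (rule linear_add[OF bounded_linear.linear[OF blJ]])
  have cP: "cJ J ?P" using Y(3) unfolding cJ_def by (simp add: blinfun.diff_left blinfun.diff_right Jdiff)
  have cYY: "cJ J (Y o\<^sub>L Y)" using Y(3) unfolding cJ_def by simp
  have cG: "cJ J (GOp T A q Y)" using Phi_cJ[OF cP] cYY unfolding cJ_def GOp_def
    by (simp add: blinfun.add_left blinfun.scaleR_left Jadd J_scale)
  show ?thesis unfolding Cset_def using n sG cG by simp
qed

lemma G_lip:
  assumes "Y \<in> Cset J" "Z \<in> Cset J"
  shows "dist (GOp T A q Y) (GOp T A q Z) \<le> 3/8 * dist Y Z"
proof -
  let ?e = "M\<^sup>2 * (\<Sum>n. 1 / q (Suc n))"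
  have e0: "?e \<ge> 0" using qpos by (intro mult_nonneg_nonneg suminf_nonneg qsum) (auto intro: less_imp_le)
  have Y: "norm Y \<le> 1/4" and Z: "norm Z \<le> 1/4" using assms unfolding Cset_def by auto
  have nIY: "norm (id_blinfun - Y) \<le> 5/4" using blin_norm_id_minus[of Y] Y by linarith
  have nIZ: "norm (id_blinfun - Z) \<le> 5/4" using blin_norm_id_minus[of Z] Z by linarith
  have eq1: "(Y o\<^sub>L Y) - (Z o\<^sub>L Z) = (Y o\<^sub>L (Y - Z)) + ((Y - Z) o\<^sub>L Z)"
    by (rule blinfun_eqI) (simp add: blinfun.diff_left blinfun.diff_right blinfun.add_left)
  have eq2: "((id_blinfun - Y) o\<^sub>L (id_blinfun - Y)) - ((id_blinfun - Z) o\<^sub>L (id_blinfun - Z))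
      = ((id_blinfun - Y) o\<^sub>L (Z - Y)) + ((Z - Y) o\<^sub>L (id_blinfun - Z))"
    by (rule blinfun_eqI) (simp add: blinfun.diff_left blinfun.diff_right blinfun.add_left)
  have n1: "norm ((Y o\<^sub>L Y) - (Z o\<^sub>L Z)) \<le> 1/2 * norm (Y - Z)"
  proof -
    have "norm ((Y o\<^sub>L Y) - (Z o\<^sub>L Z)) \<le> norm (Y o\<^sub>L (Y - Z)) + norm ((Y - Z) o\<^sub>L Z)"
      unfolding eq1 by (rule norm_triangle_ineq)
    also have "\<dots> \<le> norm Y * norm (Y - Z) + norm (Y - Z) * norm Z"
      by (intro add_mono norm_blinfun_compose)
    also have "\<dots> \<le> 1/4 * norm (Y - Z) + norm (Y - Z) * (1/4)"
      using Y Z by (intro add_mono mult_mono) auto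
    finally show ?thesis by simp
  qed
  have n2: "norm (((id_blinfun - Y) o\<^sub>L (id_blinfun - Y)) - ((id_blinfun - Z) o\<^sub>L (id_blinfun - Z))) \<le> 5/2 * norm (Y - Z)"
  proof -
    have "norm (((id_blinfun - Y) o\<^sub>L (id_blinfun - Y)) - ((id_blinfun - Z) o\<^sub>L (id_blinfun - Z)))
        \<le> norm ((id_blinfun - Y) o\<^sub>L (Z - Y)) + norm ((Z - Y) o\<^sub>L (id_blinfun - Z))"
      unfolding eq2 by (rule norm_triangle_ineq)
    also have "\<dots> \<le> norm (id_blinfun - Y) * norm (Z - Y) + norm (Z - Y) * norm (id_blinfun - Z)"
      by (intro add_mono norm_blinfun_compose)
    also have "\<dots> \<le> 5/4 * norm (Z - Y) + norm (Z - Y) * (5/4)"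
      using nIY nIZ by (intro add_mono mult_mono) auto
    finally show ?thesis by (simp add: norm_minus_commute)
  qed
  have "GOp T A q Y - GOp T A q Z = (1/2) *\<^sub>R (((Y o\<^sub>L Y) - (Z o\<^sub>L Z)) +
      PhiOp T A q (((id_blinfun - Y) o\<^sub>L (id_blinfun - Y)) - ((id_blinfun - Z) o\<^sub>L (id_blinfun - Z))))"
    unfolding GOp_def Phi_diff[symmetric] by (simp add: algebra_simps)
  then have "norm (GOp T A q Y - GOp T A q Z) \<le> 1/2 * (norm ((Y o\<^sub>L Y) - (Z o\<^sub>L Z)) +
      norm (PhiOp T A q (((id_blinfun - Y) o\<^sub>L (id_blinfun - Y)) - ((id_blinfun - Z) o\<^sub>L (id_blinfun - Z)))))"
    using norm_triangle_ineq by simp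
  also have "\<dots> \<le> 1/2 * (1/2 * norm (Y - Z) + ?e * (5/2 * norm (Y - Z)))"
  proof -
    have "norm (PhiOp T A q (((id_blinfun - Y) o\<^sub>L (id_blinfun - Y)) - ((id_blinfun - Z) o\<^sub>L (id_blinfun - Z))))
        \<le> ?e * norm (((id_blinfun - Y) o\<^sub>L (id_blinfun - Y)) - ((id_blinfun - Z) o\<^sub>L (id_blinfun - Z)))"
      by (rule norm_Phi)
    also have "\<dots> \<le> ?e * (5/2 * norm (Y - Z))" using n2 e0 by (rule mult_left_mono)
    finally have pb: "norm (PhiOp T A q (((id_blinfun - Y) o\<^sub>L (id_blinfun - Y)) - ((id_blinfun - Z) o\<^sub>L (id_blinfun - Z))))
        \<le> ?e * (5/2 * norm (Y - Z))" .
    show ?thesis by (rule mult_left_mono[OF add_mono[OF n1 pb]]) simp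
  qed
  also have "\<dots> \<le> 1/2 * (1/2 * norm (Y - Z) + 1/10 * (5/2 * norm (Y - Z)))"
    using small by (intro mult_left_mono add_left_mono mult_right_mono) auto
  also have "\<dots> = 3/8 * norm (Y - Z)" by simp
  finally show ?thesis by (simp add: dist_norm)
qed

lemma closed_Cset: "closed (Cset J)"
proof -
  have c1: "closed {Y :: 'a \<Rightarrow>\<^sub>L 'a. norm Y \<le> 1/4}"
    by (rule closed_Collect_le) (auto intro: continuous_intros)
  have c2: "closed {Y :: 'a \<Rightarrow>\<^sub>L 'a. \<forall>x y. inner (Y x) y = inner x (Y y)}"
  proof (intro closed_Collect_all closed_Collect_eq)
    fix x y :: 'a
    show "continuous_on UNIV (\<lambda>Y::'a \<Rightarrow>\<^sub>L 'a. inner (Y x) y)"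
      by (intro linear_continuous_on bounded_linear_compose[OF bounded_linear_inner_left] blinfun.bounded_linear_left)
    show "continuous_on UNIV (\<lambda>Y::'a \<Rightarrow>\<^sub>L 'a. inner x (Y y))"
      by (intro linear_continuous_on bounded_linear_compose[OF bounded_linear_inner_right] blinfun.bounded_linear_left)
  qed
  have c3: "closed {Y :: 'a \<Rightarrow>\<^sub>L 'a. \<forall>x. Y (J x) = J (Y x)}"
  proof (intro closed_Collect_all closed_Collect_eq)
    fix x :: 'a
    show "continuous_on UNIV (\<lambda>Y::'a \<Rightarrow>\<^sub>L 'a. Y (J x))"
      by (intro linear_continuous_on blinfun.bounded_linear_left)
    show "continuous_on UNIV (\<lambda>Y::'a \<Rightarrow>\<^sub>L 'a. J (Y x))"
      by (intro linear_continuous_on bounded_linear_compose[OF blJ] blinfun.bounded_linear_left)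
  qed
  have "Cset J = {Y :: 'a \<Rightarrow>\<^sub>L 'a. norm Y \<le> 1/4} \<inter> {Y :: 'a \<Rightarrow>\<^sub>L 'a. \<forall>x y. inner (Y x) y = inner x (Y y)} \<inter> {Y :: 'a \<Rightarrow>\<^sub>L 'a. \<forall>x. Y (J x) = J (Y x)}"
    unfolding Cset_def sa_def cJ_def by auto
  then show ?thesis using c1 c2 c3 by (simp add: closed_Int)
qed

lemma complete_Cset: "complete (Cset J)"
  unfolding complete_def
proof (intro allI impI)
  fix f :: "nat \<Rightarrow> 'a \<Rightarrow>\<^sub>L 'a"
  assume "(\<forall>n. f n \<in> Cset J) \<and> Cauchy f"
  then have fC: "\<And>n. f n \<in> Cset J" and "Cauchy f" by auto
  then obtain l where l: "f \<longlonglongrightarrow> l" using blinfun_Cauchy_conv convergent_def by blast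
  have "l \<in> Cset J" using closed_sequentially[OF closed_Cset] fC l by blast
  then show "\<exists>l\<in>Cset J. f \<longlonglongrightarrow> l" using l by blast
qed

lemma fixed_point_exists: "\<exists>Y\<in>Cset J. GOp T A q Y = Y"
proof -
  have "0 \<in> Cset J" unfolding Cset_def sa_def cJ_def using blJ by (simp add: linear_simps)
  then have "\<exists>!Y\<in>Cset J. GOp T A q Y = Y"
    by (intro Banach_fix[of "Cset J" "3/8" "GOp T A q"] complete_Cset G_lip) (use G_in in auto)
  then show ?thesis by blast
qed

lemma D_exists:
  "\<exists>D :: 'a \<Rightarrow>\<^sub>L 'a. sa D \<and> cJ J D \<and> (\<forall>h. (\<lambda>n. (1 / q n) *\<^sub>R (T ^^ n) (D (D ((A ^^ n) h)))) sums h)"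
proof -
  obtain Y where Y: "Y \<in> Cset J" "GOp T A q Y = Y" using fixed_point_exists by blast
  define D where "D = id_blinfun - Y"
  have saY: "sa Y" and cY: "cJ J Y" using Y(1) unfolding Cset_def by auto
  have saD: "sa D" using saY unfolding sa_def D_def by (simp add: blinfun.diff_left inner_diff_left inner_diff_right)
  have Jdiff: "J (a - b) = J a - J b" for a b by (rule linear_diff[OF bounded_linear.linear[OF blJ]])
  have cD: "cJ J D" using cY unfolding cJ_def D_def by (simp add: blinfun.diff_left Jdiff)
  have key: "(\<lambda>n. (1 / q n) *\<^sub>R (T ^^ n) (D (D ((A ^^ n) h)))) sums h" for h
  proof -
    let ?P = "D o\<^sub>L D"
    have GY: "blinfun_apply (GOp T A q Y) h = Y h" using Y(2) by simp
    have "blinfun_apply (GOp T A q Y) h = (1/2) *\<^sub>R (Y (Y h) + blinfun_apply (PhiOp T A q ?P) h)"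
      unfolding GOp_def D_def by (simp add: blinfun.add_left blinfun.scaleR_left)
    with GY have "Y h = (1/2) *\<^sub>R (Y (Y h) + blinfun_apply (PhiOp T A q ?P) h)" by simp
    then have "2 *\<^sub>R Y h = 2 *\<^sub>R ((1/2) *\<^sub>R (Y (Y h) + blinfun_apply (PhiOp T A q ?P) h))" by simp
    also have "\<dots> = Y (Y h) + blinfun_apply (PhiOp T A q ?P) h" by simp
    finally have t: "2 *\<^sub>R Y h = Y (Y h) + blinfun_apply (PhiOp T A q ?P) h" .
    have e1: "blinfun_apply (PhiOp T A q ?P) h = 2 *\<^sub>R Y h - Y (Y h)"
      by (simp only: t add_diff_cancel_left')
    have e2: "D (D h) = h - 2 *\<^sub>R Y h + Y (Y h)"
      unfolding D_def by (simp add: blinfun.diff_left blinfun.diff_right scaleR_2 algebra_simps)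
    have s1: "(\<lambda>n. blinfun_apply (trm T A q ?P n) h) sums (blinfun_apply (PhiOp T A q ?P) h)"
      using summable_trm_apply[of ?P h] Phi_apply[of ?P h] summable_sums by metis
    have "(\<lambda>n. (1 / q (Suc n)) *\<^sub>R (T ^^ Suc n) (D (D ((A ^^ Suc n) h)))) sums (blinfun_apply (PhiOp T A q ?P) h)"
      using s1 unfolding trm_apply by simp
    then have "(\<lambda>n. (1 / q n) *\<^sub>R (T ^^ n) (D (D ((A ^^ n) h)))) sums
        (blinfun_apply (PhiOp T A q ?P) h + (1 / q 0) *\<^sub>R (T ^^ 0) (D (D ((A ^^ 0) h))))"
      by (subst sums_Suc_iff[symmetric]) simp
    also have "blinfun_apply (PhiOp T A q ?P) h + (1 / q 0) *\<^sub>R (T ^^ 0) (D (D ((A ^^ 0) h))) = h"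
      using e1 e2 q0 by simp
    finally show ?thesis .
  qed
  show ?thesis using saD cD key by blast
qed

end



lemma l2seq_iff: "f \<in> l2seq \<longleftrightarrow> summable (\<lambda>n. (norm (f n))\<^sup>2)"
  unfolding l2seq_def by simp

lemma l2_inner_summable:
  assumes "x \<in> l2seq" "y \<in> l2seq"
  shows "summable (\<lambda>n. inner (x n) (y n))"
proof (rule summable_comparison_test)
  show "summable (\<lambda>n. ((norm (x n))\<^sup>2 + (norm (y n))\<^sup>2) / 2)"
    using assms unfolding l2seq_iff by (intro summable_divide summable_add)
  show "\<exists>N. \<forall>n\<ge>N. norm (inner (x n) (y n)) \<le> ((norm (x n))\<^sup>2 + (norm (y n))\<^sup>2) / 2"
  proof (intro exI allI impI)
    fix n
    have "\<bar>inner (x n) (y n)\<bar> \<le> norm (x n) * norm (y n)" by (rule Cauchy_Schwarz_ineq2)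
    also have "\<dots> \<le> ((norm (x n))\<^sup>2 + (norm (y n))\<^sup>2) / 2"
      using sum_squares_bound[of "norm (x n)" "norm (y n)"] by (simp add: power2_eq_square)
    finally show "norm (inner (x n) (y n)) \<le> ((norm (x n))\<^sup>2 + (norm (y n))\<^sup>2) / 2" by simp
  qed
qed

lemma l2seq_add:
  assumes "x \<in> l2seq" "y \<in> l2seq"
  shows "(\<lambda>n. x n + y n) \<in> l2seq"
  unfolding l2seq_iff
proof (rule summable_comparison_test)
  show "summable (\<lambda>n. 2 * (norm (x n))\<^sup>2 + 2 * (norm (y n))\<^sup>2)"
    using assms unfolding l2seq_iff by (intro summable_add summable_mult)
  show "\<exists>N. \<forall>n\<ge>N. norm ((norm (x n + y n))\<^sup>2) \<le> 2 * (norm (x n))\<^sup>2 + 2 * (norm (y n))\<^sup>2"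
  proof (intro exI allI impI)
    fix n
    have "norm (x n + y n) \<le> norm (x n) + norm (y n)" by (rule norm_triangle_ineq)
    then have "(norm (x n + y n))\<^sup>2 \<le> (norm (x n) + norm (y n))\<^sup>2"
      by (intro power_mono) auto
    also have "\<dots> \<le> 2 * (norm (x n))\<^sup>2 + 2 * (norm (y n))\<^sup>2"
      using sum_squares_bound[of "norm (x n)" "norm (y n)"] by (simp add: power2_eq_square algebra_simps)
    finally show "norm ((norm (x n + y n))\<^sup>2) \<le> 2 * (norm (x n))\<^sup>2 + 2 * (norm (y n))\<^sup>2" by simp
  qed
qed

lemma l2seq_weight:
  assumes "x \<in> l2seq" and "\<And>n. \<bar>c n\<bar> \<le> K"
  shows "(\<lambda>n. c n *\<^sub>R x n) \<in> l2seq"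
  unfolding l2seq_iff
proof (rule summable_comparison_test)
  show "summable (\<lambda>n. K\<^sup>2 * (norm (x n))\<^sup>2)"
    using assms unfolding l2seq_iff by (intro summable_mult)
  show "\<exists>N. \<forall>n\<ge>N. norm ((norm (c n *\<^sub>R x n))\<^sup>2) \<le> K\<^sup>2 * (norm (x n))\<^sup>2"
  proof (intro exI allI impI)
    fix n
    have "(\<bar>c n\<bar>)\<^sup>2 \<le> K\<^sup>2" using assms(2)[of n] by (intro power_mono) auto
    then show "norm ((norm (c n *\<^sub>R x n))\<^sup>2) \<le> K\<^sup>2 * (norm (x n))\<^sup>2"
      by (simp add: power_mult_distrib mult_right_mono)
  qed
qed

lemma l2seq_scale: "x \<in> l2seq \<Longrightarrow> (\<lambda>n. r *\<^sub>R x n) \<in> l2seq"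
  using l2seq_weight[of x "\<lambda>n. r" "\<bar>r\<bar>"] by simp

lemma l2seq_diff:
  assumes "x \<in> l2seq" "y \<in> l2seq"
  shows "(\<lambda>n. x n - y n) \<in> l2seq"
  using l2seq_add[OF assms(1) l2seq_scale[OF assms(2), of "-1"]] by simp

lemma l2seq_zero: "(\<lambda>n. 0) \<in> l2seq"
  unfolding l2seq_iff by simp

lemma l2inner_diff_left:
  assumes "x \<in> l2seq" "y \<in> l2seq" "z \<in> l2seq"
  shows "l2inner (\<lambda>n. x n - y n) z = l2inner x z - l2inner y z"
  unfolding l2inner_def
  using suminf_diff[OF l2_inner_summable[OF assms(1,3)] l2_inner_summable[OF assms(2,3)]]
  by (simp add: inner_diff_left)

lemma l2inner_commute: "l2inner x y = l2inner y x"
  unfolding l2inner_def by (simp add: inner_commute)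

lemma l2inner_self: "l2inner x x = (\<Sum>n. (norm (x n))\<^sup>2)"
  unfolding l2inner_def by (simp add: power2_norm_eq_inner)


definition wq :: "(nat \<Rightarrow> real) \<Rightarrow> nat \<Rightarrow> real" where
  "wq q n = sqrt (q (Suc n) / q n)"

definition Sw :: "(nat \<Rightarrow> real) \<Rightarrow> (nat \<Rightarrow> 'a::real_vector) \<Rightarrow> nat \<Rightarrow> 'a" where
  "Sw w k = (\<lambda>m. case m of 0 \<Rightarrow> 0 | Suc n \<Rightarrow> w n *\<^sub>R k n)"

definition Swadj :: "(nat \<Rightarrow> real) \<Rightarrow> (nat \<Rightarrow> 'a::real_vector) \<Rightarrow> nat \<Rightarrow> 'a" where
  "Swadj w y = (\<lambda>n. w n *\<^sub>R y (Suc n))"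

lemma Sw_0[simp]: "Sw w k 0 = 0" unfolding Sw_def by simp
lemma Sw_Suc[simp]: "Sw w k (Suc n) = w n *\<^sub>R k n" unfolding Sw_def by simp

lemma Sw_l2_gen: assumes "k \<in> l2seq" "\<And>n. \<bar>w n\<bar> \<le> K" shows "Sw w k \<in> l2seq"
proof -
  have "(\<lambda>n. w n *\<^sub>R k n) \<in> l2seq" by (rule l2seq_weight[OF assms])
  then have "summable (\<lambda>n. (norm (Sw w k (Suc n)))\<^sup>2)" unfolding l2seq_iff by simp
  then show ?thesis unfolding l2seq_iff by (subst summable_Suc_iff[symmetric])
qed

context
  fixes q :: "nat \<Rightarrow> real" and K2 :: real
  assumes qpos: "\<And>n. q n > 0" and qmono: "\<And>n. q n \<le> q (Suc n)"
    and qbd: "\<And>n. q (Suc n) \<le> K2 * q n"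
    and q3: "\<And>n. q n - 3 * q (n + 1) + 3 * q (n + 2) - q (n + 3) = 0"
begin

lemma wq_ge1: "wq q n \<ge> 1"
  unfolding wq_def using qmono[of n] qpos[of n] by simp

lemma wq_sq: "(wq q n)\<^sup>2 = q (Suc n) / q n"
  unfolding wq_def using qpos[of n] qpos[of "Suc n"] by simp

lemma wq_bd: "\<bar>wq q n\<bar> \<le> sqrt K2"
proof -
  have "q (Suc n) / q n \<le> K2" using qbd[of n] qpos[of n] by (simp add: divide_le_eq)
  then have "sqrt (q (Suc n) / q n) \<le> sqrt K2" by (rule real_sqrt_le_mono)
  then show ?thesis unfolding wq_def using qpos[of n] qpos[of "Suc n"] by simp
qed

lemma Sw_l2: assumes "k \<in> l2seq" shows "Sw (wq q) k \<in> l2seq"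
proof -
  have "(\<lambda>n. wq q n *\<^sub>R k n) \<in> l2seq" by (rule l2seq_weight[OF assms wq_bd])
  then have "summable (\<lambda>n. (norm (Sw (wq q) k (Suc n)))\<^sup>2)" unfolding l2seq_iff by simp
  then show ?thesis unfolding l2seq_iff by (subst summable_Suc_iff[symmetric])
qed

lemma Swadj_l2: assumes "y \<in> l2seq" shows "Swadj (wq q) y \<in> l2seq"
proof -
  have "(\<lambda>n. y (Suc n)) \<in> l2seq" using assms unfolding l2seq_iff by (subst summable_Suc_iff)
  then show ?thesis unfolding Swadj_def by (rule l2seq_weight[OF _ wq_bd])
qed

lemma Sw_inner:
  assumes "x \<in> l2seq" "y \<in> l2seq"
  shows "l2inner (Sw (wq q) x) y = l2inner x (Swadj (wq q) y)"
proof -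
  have s: "summable (\<lambda>n. inner (Sw (wq q) x n) (y n))" by (rule l2_inner_summable[OF Sw_l2[OF assms(1)] assms(2)])
  have "(\<lambda>n. inner (Sw (wq q) x (Suc n)) (y (Suc n))) sums (l2inner (Sw (wq q) x) y)"
    using sums_Suc_iff[of "\<lambda>n. inner (Sw (wq q) x n) (y n)"] summable_sums[OF s]
    unfolding l2inner_def by simp
  then have "(\<lambda>n. inner (x n) (Swadj (wq q) y n)) sums (l2inner (Sw (wq q) x) y)"
    unfolding Swadj_def by simp
  then show ?thesis unfolding l2inner_def by (simp add: sums_iff)
qed

lemma l2_uniq:
  assumes "z \<in> l2seq" "z' \<in> l2seq" "\<And>x. x \<in> l2seq \<Longrightarrow> l2inner x z = l2inner x z'"
  shows "z = z'"
proof -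
  let ?d = "\<lambda>n. z n - z' n"
  have d: "?d \<in> l2seq" by (rule l2seq_diff[OF assms(1,2)])
  have "l2inner ?d ?d = l2inner z ?d - l2inner z' ?d" by (rule l2inner_diff_left[OF assms(1,2) d])
  also have "\<dots> = 0" using assms(3)[OF d] by (simp add: l2inner_commute)
  finally have "(\<Sum>n. (norm (?d n))\<^sup>2) = 0" by (simp add: l2inner_self)
  then have "\<forall>n. (norm (?d n))\<^sup>2 = 0"
    using suminf_eq_zero_iff[of "\<lambda>n. (norm (?d n))\<^sup>2"] d unfolding l2seq_iff by simp
  then show ?thesis by auto
qed

lemma l2adj_Sw: assumes "y \<in> l2seq" shows "l2adj (Sw (wq q)) y = Swadj (wq q) y"
  unfolding l2adj_def
proof (rule the_equality)
  show "Swadj (wq q) y \<in> l2seq \<and> (\<forall>x\<in>l2seq. l2inner (Sw (wq q) x) y = l2inner x (Swadj (wq q) y))"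
    using Swadj_l2[OF assms] Sw_inner[OF _ assms] by blast
  fix z assume z: "z \<in> l2seq \<and> (\<forall>x\<in>l2seq. l2inner (Sw (wq q) x) y = l2inner x z)"
  show "z = Swadj (wq q) y"
    by (rule l2_uniq) (use z Swadj_l2[OF assms] Sw_inner[OF _ assms] in auto)
qed

lemma Sw_pow_l2: "x \<in> l2seq \<Longrightarrow> (Sw (wq q) ^^ j) x \<in> l2seq"
  by (induction j) (auto intro: Sw_l2)

lemma Swadj_pow_l2: "x \<in> l2seq \<Longrightarrow> (Swadj (wq q) ^^ j) x \<in> l2seq"
  by (induction j) (auto intro: Swadj_l2)

lemma l2adj_pow: "x \<in> l2seq \<Longrightarrow> (l2adj (Sw (wq q)) ^^ j) x = (Swadj (wq q) ^^ j) x"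
  by (induction j) (auto simp: l2adj_Sw Swadj_pow_l2)

lemma Sw_pow: "(Sw (wq q) ^^ j) x m = (if m < j then 0 else sqrt (q m / q (m - j)) *\<^sub>R x (m - j))"
proof (induction j arbitrary: m)
  case 0 then show ?case using qpos[of m] by simp
next
  case (Suc j)
  show ?case
  proof (cases m)
    case 0 then show ?thesis by simp
  next
    case (Suc n)
    have e: "wq q n * sqrt (q n / q (n - j)) = sqrt (q (Suc n) / q (n - j))"
      unfolding wq_def using qpos[of n] by (simp add: real_sqrt_mult[symmetric])
    show ?thesis using Suc.IH[of n] e by (simp add: Suc)
  qed
qed

lemma Swadj_pow: "(Swadj (wq q) ^^ j) y n = sqrt (q (n + j) / q n) *\<^sub>R y (n + j)"
proof (induction j arbitrary: y)
  case 0 then show ?case using qpos[of n] by simp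
next
  case (Suc j)
  have "(Swadj (wq q) ^^ Suc j) y n = (Swadj (wq q) ^^ j) (Swadj (wq q) y) n"
    by (simp only: funpow_Suc_right comp_def)
  also have "\<dots> = sqrt (q (n + j) / q n) *\<^sub>R (wq q (n + j) *\<^sub>R y (Suc (n + j)))"
    unfolding Suc.IH by (simp add: Swadj_def)
  also have "\<dots> = sqrt (q (n + Suc j) / q n) *\<^sub>R y (n + Suc j)"
    unfolding wq_def using qpos[of "n + j"] by (simp add: real_sqrt_mult[symmetric])
  finally show ?case .
qed

lemma adj_pow_Sw_pow: "(Swadj (wq q) ^^ j) ((Sw (wq q) ^^ j) x) n = (q (n + j) / q n) *\<^sub>R x n"
  unfolding Swadj_pow Sw_pow using qpos[of n] qpos[of "n+j"]
  by (simp add: real_sqrt_mult[symmetric])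

lemma Sw_three_isometric: "three_isometric (Sw (wq q))"
  unfolding three_isometric_def
proof (intro ballI ext)
  fix x :: "nat \<Rightarrow> 'a::real_inner" and n assume x: "x \<in> l2seq"
  have "(\<Sum>j\<le>3. ((-1) ^ j * real (3 choose j)) *\<^sub>R ((l2adj (Sw (wq q)) ^^ j) ((Sw (wq q) ^^ j) x)) n)
      = (\<Sum>j\<le>3. ((-1) ^ j * real (3 choose j) * (q (n + j) / q n)) *\<^sub>R x n)"
    by (simp add: l2adj_pow[OF Sw_pow_l2[OF x]] adj_pow_Sw_pow)
  also have "\<dots> = (\<Sum>j\<le>3. ((-1) ^ j * real (3 choose j) * (q (n + j) / q n))) *\<^sub>R x n"
    by (rule scaleR_sum_left[symmetric])
  also have "(\<Sum>j\<le>3. ((-1) ^ j * real (3 choose j) * (q (n + j) / q n)))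
      = ((q n - 3 * q (n + 1) + 3 * q (n + 2) - q (n + 3)) / q n)"
  proof -
    have s4: "(\<Sum>j\<le>3. f j) = f 0 + f 1 + f 2 + f 3" for f :: "nat \<Rightarrow> real"
      by (simp add: numeral_3_eq_3 numeral_2_eq_2)
    have c: "(3::nat) choose 1 = 3" "(3::nat) choose 2 = 3" "(3::nat) choose 3 = 1"
      by (simp_all add: numeral_3_eq_3 numeral_2_eq_2)
    show ?thesis unfolding s4 c by (simp add: diff_divide_distrib add_divide_distrib)
  qed
  also have "\<dots> = 0" using q3[of n] by simp
  finally show "(\<Sum>j\<le>3. ((-1) ^ j * real (3 choose j)) *\<^sub>R ((l2adj (Sw (wq q)) ^^ j) ((Sw (wq q) ^^ j) x)) n) = 0" by simp
qed


lemma Sw_self: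
  assumes x: "x \<in> l2seq"
  shows "(\<lambda>n. (wq q n)\<^sup>2 * (norm (x n))\<^sup>2) sums l2inner (Sw (wq q) x) (Sw (wq q) x)"
proof -
  have s: "summable (\<lambda>n. (norm (Sw (wq q) x n))\<^sup>2)" using Sw_l2[OF x] unfolding l2seq_iff .
  have "(\<lambda>n. (norm (Sw (wq q) x (Suc n)))\<^sup>2) sums l2inner (Sw (wq q) x) (Sw (wq q) x)"
    using sums_Suc_iff[of "\<lambda>n. (norm (Sw (wq q) x n))\<^sup>2"] summable_sums[OF s]
    unfolding l2inner_self by simp
  then show ?thesis by (simp add: power_mult_distrib)
qed

lemma Sw_expansive: "l2_expansive (Sw (wq q))"
  unfolding l2_expansive_def l2norm_def
proof (intro ballI real_sqrt_le_mono)
  fix x :: "nat \<Rightarrow> 'a::real_inner" assume x: "x \<in> l2seq"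
  have s1: "(\<lambda>n. (norm (x n))\<^sup>2) sums l2inner x x"
    using x unfolding l2seq_iff l2inner_self by (simp add: summable_sums)
  have le: "(norm (x n))\<^sup>2 \<le> (wq q n)\<^sup>2 * (norm (x n))\<^sup>2" for n
    using wq_ge1[of n] by (simp add: mult_le_cancel_right1 one_le_power)
  show "l2inner x x \<le> l2inner (Sw (wq q) x) (Sw (wq q) x)"
    by (rule sums_le[OF le s1 Sw_self[OF x]])
qed

lemma Sw_analytic: "l2_analytic (Sw (wq q) :: (nat \<Rightarrow> 'a::real_inner) \<Rightarrow> nat \<Rightarrow> 'a)"
  unfolding l2_analytic_def
proof
  show "(\<Inter>n. (Sw (wq q) ^^ n) ` l2seq) \<subseteq> {\<lambda>n. 0}"
  proof
    fix y assume y: "y \<in> (\<Inter>n. (Sw (wq q) ^^ n) ` l2seq)"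
    have "y m = 0" for m
    proof -
      from y obtain x where "y = (Sw (wq q) ^^ Suc m) x" by blast
      then show ?thesis using Sw_pow[of "Suc m" x m] by simp
    qed
    then show "y \<in> {\<lambda>n. 0}" by auto
  qed
  show "{\<lambda>n. 0} \<subseteq> (\<Inter>n. (Sw (wq q) ^^ n) ` l2seq)"
    by (auto intro!: image_eqI[where x="\<lambda>n. 0"] ext simp: Sw_pow l2seq_zero)
qed

lemma Sw_operator:
  assumes blJ: "bounded_linear J"
  shows "l2_operator J (Sw (wq q))"
  unfolding l2_operator_def
proof (intro conjI ballI allI)
  show "Sw (wq q) ` l2seq \<subseteq> l2seq" using Sw_l2 by blast
  fix x :: "nat \<Rightarrow> 'a::real_inner" assume x: "x \<in> l2seq"
  {
    fix y show "Sw (wq q) (\<lambda>n. x n + y n) = (\<lambda>n. Sw (wq q) x n + Sw (wq q) y n)"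
      by (rule ext) (simp add: Sw_def scaleR_add_right split: nat.split)
  }
  {
    fix r :: real show "Sw (wq q) (\<lambda>n. r *\<^sub>R x n) = (\<lambda>n. r *\<^sub>R Sw (wq q) x n)"
      by (rule ext) (simp add: Sw_def split: nat.split)
  }
  show "Sw (wq q) (l2J J x) = l2J J (Sw (wq q) x)"
    by (rule ext) (simp add: Sw_def l2J_def linear_simps[OF blJ] split: nat.split)
next
  show "\<exists>C. \<forall>x\<in>l2seq. l2norm (Sw (wq q) x) \<le> C * l2norm (x :: nat \<Rightarrow> 'a::real_inner)"
  proof (intro exI ballI)
    fix x :: "nat \<Rightarrow> 'a" assume x: "x \<in> l2seq"
    have "(\<lambda>n. (norm (x n))\<^sup>2) sums l2inner x x"
      using x unfolding l2seq_iff l2inner_self by (simp add: summable_sums)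
    then have s2: "(\<lambda>n. K2 * (norm (x n))\<^sup>2) sums (K2 * l2inner x x)" by (rule sums_mult)
    have "(wq q n)\<^sup>2 * (norm (x n))\<^sup>2 \<le> K2 * (norm (x n))\<^sup>2" for n
    proof -
      have "(wq q n)\<^sup>2 \<le> K2" unfolding wq_sq using qbd[of n] qpos[of n] by (simp add: divide_le_eq)
      then show ?thesis by (simp add: mult_right_mono)
    qed
    then have le: "l2inner (Sw (wq q) x) (Sw (wq q) x) \<le> K2 * l2inner x x"
      using Sw_self[OF x] s2 by (rule sums_le)
    have "l2norm (Sw (wq q) x) \<le> sqrt (K2 * l2inner x x)" unfolding l2norm_def using le by simp
    also have "\<dots> = sqrt K2 * l2norm x" unfolding l2norm_def by (simp add: real_sqrt_mult)
    finally show "l2norm (Sw (wq q) x) \<le> sqrt K2 * l2norm x" .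
  qed
qed

end


definition Vm :: "('a::real_normed_vector \<Rightarrow> 'a) \<Rightarrow> ('a \<Rightarrow>\<^sub>L 'a) \<Rightarrow> (nat \<Rightarrow> real) \<Rightarrow> 'a \<Rightarrow> nat \<Rightarrow> 'a" where
  "Vm A D q h = (\<lambda>n. (1 / sqrt (q n)) *\<^sub>R D ((A ^^ n) h))"

definition Vadjm :: "('a::real_normed_vector \<Rightarrow> 'a) \<Rightarrow> ('a \<Rightarrow>\<^sub>L 'a) \<Rightarrow> (nat \<Rightarrow> real) \<Rightarrow> (nat \<Rightarrow> 'a) \<Rightarrow> 'a" where
  "Vadjm T D q k = (\<Sum>n. (1 / sqrt (q n)) *\<^sub>R (T ^^ n) (D (k n)))"

context
  fixes T A J :: "'a::{real_inner,complete_space} \<Rightarrow> 'a" and D :: "'a \<Rightarrow>\<^sub>L 'a"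
    and M :: real and q :: "nat \<Rightarrow> real"
  assumes blT: "bounded_linear T" and blA: "bounded_linear A" and blJ: "bounded_linear J"
    and adj: "\<And>x y. inner (T x) y = inner x (A y)"
    and TJ: "\<And>x. T (J x) = J (T x)" and AJ: "\<And>x. A (J x) = J (A x)"
    and TM: "\<And>n x. norm ((T ^^ n) x) \<le> M * norm x"
    and AM: "\<And>n x. norm ((A ^^ n) x) \<le> M * norm x"
    and M0: "M \<ge> 0"
    and qpos: "\<And>n. q n > 0"
    and qsumall: "summable (\<lambda>n. 1 / q n)"
    and saD: "sa D" and cD: "cJ J D"
    and Dsum: "\<And>h. (\<lambda>n. (1 / q n) *\<^sub>R (T ^^ n) (D (D ((A ^^ n) h)))) sums h"
begin

lemma Tn_scale: "(T ^^ n) (c *\<^sub>R u) = c *\<^sub>R (T ^^ n) u"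
  by (rule linear.scaleR[OF bounded_linear.linear[OF funpow_bl[OF blT]]])
lemma Tn_add: "(T ^^ n) (u + v) = (T ^^ n) u + (T ^^ n) v"
  by (rule linear_add[OF bounded_linear.linear[OF funpow_bl[OF blT]]])
lemma An_scale: "(A ^^ n) (c *\<^sub>R u) = c *\<^sub>R (A ^^ n) u"
  by (rule linear.scaleR[OF bounded_linear.linear[OF funpow_bl[OF blA]]])
lemma An_add: "(A ^^ n) (u + v) = (A ^^ n) u + (A ^^ n) v"
  by (rule linear_add[OF bounded_linear.linear[OF funpow_bl[OF blA]]])
lemma J_scale': "J (c *\<^sub>R u) = c *\<^sub>R J u"
  by (rule linear.scaleR[OF bounded_linear.linear[OF blJ]])

lemma A_adj_pow': "inner ((A ^^ n) u) v = inner u ((T ^^ n) v)"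
  using adjop_pow_inner[OF adj, of n v u] by (simp add: inner_commute)

lemma V_l2: "Vm A D q h \<in> l2seq"
  unfolding l2seq_iff Vm_def
proof (rule summable_comparison_test)
  show "summable (\<lambda>n. (norm D * M * norm h)\<^sup>2 * (1 / q n))" by (rule summable_mult[OF qsumall])
  show "\<exists>N. \<forall>n\<ge>N. norm ((norm ((1 / sqrt (q n)) *\<^sub>R blinfun_apply D ((A ^^ n) h)))\<^sup>2) \<le> (norm D * M * norm h)\<^sup>2 * (1 / q n)"
  proof (intro exI allI impI)
    fix n
    have "norm (D ((A ^^ n) h)) \<le> norm D * norm ((A ^^ n) h)" by (rule norm_blinfun)
    also have "\<dots> \<le> norm D * (M * norm h)" by (intro mult_left_mono AM) auto
    finally have b: "norm (D ((A ^^ n) h)) \<le> norm D * M * norm h" by simp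
    have "(norm ((1 / sqrt (q n)) *\<^sub>R D ((A ^^ n) h)))\<^sup>2 = (1 / q n) * (norm (D ((A ^^ n) h)))\<^sup>2"
      using qpos[of n] by (simp add: power_mult_distrib power_divide)
    also have "\<dots> \<le> (1 / q n) * (norm D * M * norm h)\<^sup>2"
      using b qpos[of n] by (intro mult_left_mono power_mono) auto
    finally show "norm ((norm ((1 / sqrt (q n)) *\<^sub>R blinfun_apply D ((A ^^ n) h)))\<^sup>2) \<le> (norm D * M * norm h)\<^sup>2 * (1 / q n)"
      by (simp add: mult.commute)
  qed
qed

lemma Vadj_summable:
  assumes k: "k \<in> l2seq"
  shows "summable (\<lambda>n. (1 / sqrt (q n)) *\<^sub>R (T ^^ n) (D (k n)))"
proof (rule summable_norm_cancel_gen[OF Cauchy_convergent])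
  show "summable (\<lambda>n. norm ((1 / sqrt (q n)) *\<^sub>R (T ^^ n) (D (k n))))"
  proof (rule summable_comparison_test)
    show "summable (\<lambda>n. (M * norm D / 2) * (1 / q n + (norm (k n))\<^sup>2))"
      using k unfolding l2seq_iff by (intro summable_mult summable_add qsumall)
    show "\<exists>N. \<forall>n\<ge>N. norm (norm ((1 / sqrt (q n)) *\<^sub>R (T ^^ n) (D (k n)))) \<le> (M * norm D / 2) * (1 / q n + (norm (k n))\<^sup>2)"
    proof (intro exI allI impI)
      fix n
      have "norm ((T ^^ n) (D (k n))) \<le> M * norm (D (k n))" by (rule TM)
      also have "\<dots> \<le> M * (norm D * norm (k n))" by (intro mult_left_mono norm_blinfun M0)
      finally have b: "norm ((T ^^ n) (D (k n))) \<le> M * norm D * norm (k n)" by simp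
      have sq: "(1 / sqrt (q n))\<^sup>2 = 1 / q n" using qpos[of n] by (simp add: power_divide)
      have "2 * (1 / sqrt (q n)) * norm (k n) \<le> (1 / sqrt (q n))\<^sup>2 + (norm (k n))\<^sup>2"
        by (rule sum_squares_bound)
      then have "2 * ((1 / sqrt (q n)) * norm (k n)) \<le> (1 / sqrt (q n))\<^sup>2 + (norm (k n))\<^sup>2"
        by (simp only: mult.assoc)
      then have ab: "(1 / sqrt (q n)) * norm (k n) \<le> (1 / q n + (norm (k n))\<^sup>2) / 2"
        unfolding sq by (simp add: le_divide_eq mult.commute)
      have "norm ((1 / sqrt (q n)) *\<^sub>R (T ^^ n) (D (k n))) = (1 / sqrt (q n)) * norm ((T ^^ n) (D (k n)))"
        using qpos[of n] by simp
      also have "\<dots> \<le> (1 / sqrt (q n)) * (M * norm D * norm (k n))"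
        using b qpos[of n] by (intro mult_left_mono) auto
      also have "\<dots> = (M * norm D) * ((1 / sqrt (q n)) * norm (k n))" by simp
      also have "\<dots> \<le> (M * norm D) * ((1 / q n + (norm (k n))\<^sup>2) / 2)"
        using ab M0 by (intro mult_left_mono) auto
      finally show "norm (norm ((1 / sqrt (q n)) *\<^sub>R (T ^^ n) (D (k n)))) \<le> (M * norm D / 2) * (1 / q n + (norm (k n))\<^sup>2)"
        by simp
    qed
  qed
qed

lemma V_inner:
  assumes k: "k \<in> l2seq"
  shows "l2inner (Vm A D q h) k = inner h (Vadjm T D q k)"
proof -
  have t: "inner (Vm A D q h n) (k n) = inner h ((1 / sqrt (q n)) *\<^sub>R (T ^^ n) (D (k n)))" for n
  proof -
    have "inner (D ((A ^^ n) h)) (k n) = inner ((A ^^ n) h) (D (k n))" using saD unfolding sa_def by blast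
    also have "\<dots> = inner h ((T ^^ n) (D (k n)))" by (rule A_adj_pow')
    finally show ?thesis unfolding Vm_def by simp
  qed
  have "l2inner (Vm A D q h) k = (\<Sum>n. inner h ((1 / sqrt (q n)) *\<^sub>R (T ^^ n) (D (k n))))"
    unfolding l2inner_def t by simp
  also have "\<dots> = inner h (Vadjm T D q k)"
    unfolding Vadjm_def by (rule bounded_linear.suminf[OF bounded_linear_inner_right Vadj_summable[OF k], symmetric])
  finally show ?thesis .
qed

lemma Vadj_V: "Vadjm T D q (Vm A D q h) = h"
proof -
  have "(1 / sqrt (q n)) *\<^sub>R (T ^^ n) (D (Vm A D q h n)) = (1 / q n) *\<^sub>R (T ^^ n) (D (D ((A ^^ n) h)))" for n
    unfolding Vm_def using qpos[of n] by (simp add: blinfun.scaleR_right Tn_scale real_sqrt_mult[symmetric])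
  then show ?thesis unfolding Vadjm_def using sums_unique[OF Dsum[of h]] by simp
qed

lemma V_norm: "l2norm (Vm A D q h) = norm h"
  unfolding l2norm_def V_inner[OF V_l2] Vadj_V by (simp add: norm_eq_sqrt_inner)

lemma V_inj: "inj (Vm A D q)"
  by (rule inj_on_inverseI[of _ "Vadjm T D q"]) (simp add: Vadj_V)

lemma V_add: "Vm A D q (x + y) = (\<lambda>n. Vm A D q x n + Vm A D q y n)"
  unfolding Vm_def by (simp add: An_add blinfun.add_right scaleR_add_right)

lemma V_scale: "Vm A D q (r *\<^sub>R x) = (\<lambda>n. r *\<^sub>R Vm A D q x n)"
  unfolding Vm_def by (simp add: An_scale blinfun.scaleR_right)

lemma V_J: "Vm A D q (J x) = l2J J (Vm A D q x)"
  unfolding Vm_def l2J_def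
  using cD unfolding cJ_def by (simp add: funpow_comm[of A J, OF AJ] J_scale')

lemma Vadj_Sw:
  assumes k: "k \<in> l2seq"
  shows "Vadjm T D q (Sw (wq q) k) = T (Vadjm T D q k)"
proof -
  let ?f = "\<lambda>m. (1 / sqrt (q m)) *\<^sub>R (T ^^ m) (D (Sw (wq q) k m))"
  have e: "?f (Suc n) = T ((1 / sqrt (q n)) *\<^sub>R (T ^^ n) (D (k n)))" for n
  proof -
    have w: "(1 / sqrt (q (Suc n))) * wq q n = 1 / sqrt (q n)"
      unfolding wq_def using qpos[of n] qpos[of "Suc n"] by (simp add: real_sqrt_divide)
    have "?f (Suc n) = ((1 / sqrt (q (Suc n))) * wq q n) *\<^sub>R T ((T ^^ n) (D (k n)))"
      by (simp add: blinfun.scaleR_right Tn_scale linear.scaleR[OF bounded_linear.linear[OF blT]])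
    also have "\<dots> = T ((1 / sqrt (q n)) *\<^sub>R (T ^^ n) (D (k n)))"
      unfolding w by (simp add: linear.scaleR[OF bounded_linear.linear[OF blT]])
    finally show ?thesis .
  qed
  have s: "(\<lambda>n. T ((1 / sqrt (q n)) *\<^sub>R (T ^^ n) (D (k n)))) sums T (Vadjm T D q k)"
    unfolding Vadjm_def by (rule bounded_linear.sums[OF blT summable_sums[OF Vadj_summable[OF k]]])
  then have "(\<lambda>n. ?f (Suc n)) sums T (Vadjm T D q k)" unfolding e .
  then have "?f sums (T (Vadjm T D q k) + ?f 0)" by (rule sums_Suc)
  then have "?f sums T (Vadjm T D q k)" by simp
  then show ?thesis unfolding Vadjm_def by (simp add: sums_iff)
qed

lemma proj_V:
  assumes k: "k \<in> l2seq"
  shows "l2proj (range (Vm A D q)) k = Vm A D q (Vadjm T D q k)"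
  unfolding l2proj_def
proof (rule the_equality)
  let ?p = "Vm A D q (Vadjm T D q k)"
  have orth: "l2inner (\<lambda>n. k n - Vm A D q a n) (Vm A D q g) = inner (Vadjm T D q k) g - inner a g" for a g
  proof -
    have "l2inner (\<lambda>n. k n - Vm A D q a n) (Vm A D q g) = l2inner k (Vm A D q g) - l2inner (Vm A D q a) (Vm A D q g)"
      by (rule l2inner_diff_left[OF k V_l2 V_l2])
    also have "\<dots> = inner g (Vadjm T D q k) - inner a g"
      by (simp add: l2inner_commute[of k] V_inner[OF k] V_inner[OF V_l2] Vadj_V)
    finally show ?thesis by (simp add: inner_commute)
  qed
  show "?p \<in> range (Vm A D q) \<and> (\<forall>m\<in>range (Vm A D q). l2inner (\<lambda>n. k n - ?p n) m = 0)"
    using orth by auto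
  fix p assume p: "p \<in> range (Vm A D q) \<and> (\<forall>m\<in>range (Vm A D q). l2inner (\<lambda>n. k n - p n) m = 0)"
  then obtain a where a: "p = Vm A D q a" by blast
  have "inner g (Vadjm T D q k) = inner g a" for g
    using p orth[of a g] unfolding a by (auto simp: inner_commute)
  then have "Vadjm T D q k = a" by (rule inner_eq_imp_eq)
  then show "p = ?p" using a by simp
qed

lemma lifting_V:
  assumes wb: "\<And>n. \<bar>wq q n\<bar> \<le> K"
  shows "l2_lifting J T (Vm A D q) (Sw (wq q))"
  unfolding l2_lifting_def
proof (intro conjI allI ballI)
  show "range (Vm A D q) \<subseteq> l2seq" using V_l2 by blast
  fix x y show "Vm A D q (x + y) = (\<lambda>n. Vm A D q x n + Vm A D q y n)" by (rule V_add)
next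
  fix x r show "Vm A D q (r *\<^sub>R x) = (\<lambda>n. r *\<^sub>R Vm A D q x n)" by (rule V_scale)
next
  fix x show "Vm A D q (J x) = l2J J (Vm A D q x)" by (rule V_J)
next
  fix x show "l2norm (Vm A D q x) = norm x" by (rule V_norm)
next
  fix k :: "nat \<Rightarrow> 'a" assume k: "k \<in> l2seq"
  have Sk: "Sw (wq q) k \<in> l2seq" by (rule Sw_l2_gen[OF k wb])
  show "Vm A D q (T (inv (Vm A D q) (l2proj (range (Vm A D q)) k))) = l2proj (range (Vm A D q)) (Sw (wq q) k)"
    unfolding proj_V[OF k] proj_V[OF Sk] inv_f_f[OF V_inj] Vadj_Sw[OF k] ..
qed

end


lemma adj_bound_gen:
  fixes F G :: "'a::real_inner \<Rightarrow> 'a"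
  assumes adj: "\<And>u v. inner (F u) v = inner u (G v)" and b: "\<And>u. norm (F u) \<le> K * norm u" and K: "K \<ge> 0"
  shows "norm (G v) \<le> K * norm v"
proof -
  define a where "a = G v"
  have "(norm a)\<^sup>2 = inner (F a) v"
    unfolding a_def by (simp add: adj power2_norm_eq_inner)
  also have "\<dots> \<le> norm (F a) * norm v" by (rule Cauchy_Schwarz_ineq2[THEN abs_le_D1])
  also have "\<dots> \<le> K * norm a * norm v" using b[of a] by (simp add: mult_right_mono)
  finally have *: "norm a * norm a \<le> norm a * (K * norm v)" by (simp add: power2_eq_square algebra_simps)
  show ?thesis
  proof (cases "norm a = 0")
    case True then show ?thesis using K unfolding a_def by simp
  next
    case False then have "norm a > 0" by simp
    with * show ?thesis unfolding a_def by simp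
  qed
qed

lemma q_facts:
  fixes \<kappa> :: real
  assumes k1: "\<kappa> \<ge> 1" and q_def: "\<And>n. q n = 1 + \<kappa> * real n * (real n + 1)"
  shows "\<And>n. q n > 0" and "q 0 = 1" and "\<And>n. q n \<le> q (Suc n)"
    and "\<And>n. q (Suc n) \<le> (3 + 2 * \<kappa>) * q n"
    and "\<And>n. q n - 3 * q (n + 1) + 3 * q (n + 2) - q (n + 3) = 0"
    and "summable (\<lambda>n. 1 / q (Suc n))" and "(\<Sum>n. 1 / q (Suc n)) \<le> 1 / \<kappa>"
    and "summable (\<lambda>n. 1 / q n)"
proof -
  show qp: "q n > 0" for n unfolding q_def using k1 by (simp add: add_pos_nonneg)
  show "q 0 = 1" unfolding q_def by simp
  show "q n \<le> q (Suc n)" for n unfolding q_def using k1 by (simp add: algebra_simps)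
  show "q (Suc n) \<le> (3 + 2 * \<kappa>) * q n" for n
  proof -
    have "q (Suc n) = q n + 2 * \<kappa> * (real n + 1)" unfolding q_def by (simp add: algebra_simps)
    also have "\<dots> \<le> q n + 2 * \<kappa> * q n + 2 * q n"
    proof -
      have "real n \<le> real n * (real n + 1)" by (simp add: algebra_simps)
      then have "\<kappa> * real n \<le> q n" unfolding q_def using k1 by (simp add: mult_left_mono algebra_simps)
      moreover have "\<kappa> \<le> \<kappa> * q n" using k1 qp[of n] by (simp add: mult_le_cancel_left1 q_def)
      moreover have "1 \<le> q n" unfolding q_def using k1 by simp
      ultimately show ?thesis by (simp add: algebra_simps)
    qed
    finally show ?thesis by (simp add: algebra_simps)
  qed
  show "q n - 3 * q (n + 1) + 3 * q (n + 2) - q (n + 3) = 0" for n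
    unfolding q_def by (simp add: algebra_simps)
  have tel: "(\<lambda>n. 1 / (real n + 1) - 1 / (real (Suc n) + 1)) sums (1 / (real 0 + 1) - 0)"
    by (rule telescope_sums'[of "\<lambda>n. 1 / (real n + 1)"])
       (use LIMSEQ_inverse_real_of_nat in \<open>simp add: inverse_eq_divide add.commute\<close>)
  then have tel2: "(\<lambda>n. (1 / \<kappa>) * (1 / (real n + 1) - 1 / (real (Suc n) + 1))) sums (1 / \<kappa>)"
    using sums_mult[OF tel, of "1 / \<kappa>"] by simp
  have cmp: "1 / q (Suc n) \<le> (1 / \<kappa>) * (1 / (real n + 1) - 1 / (real (Suc n) + 1))" for n
  proof -
    have e: "1 / (real n + 1) - 1 / (real (Suc n) + 1) = 1 / ((real n + 1) * (real n + 2))"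
      by (simp add: field_simps)
    have "\<kappa> * (real n + 1) * (real n + 2) \<le> q (Suc n)" unfolding q_def by (simp add: algebra_simps)
    moreover have "\<kappa> * (real n + 1) * (real n + 2) > 0" using k1 by simp
    ultimately have "1 / q (Suc n) \<le> 1 / (\<kappa> * (real n + 1) * (real n + 2))"
      by (simp add: frac_le)
    also have "1 / (\<kappa> * (real n + 1) * (real n + 2)) = (1 / \<kappa>) * (1 / ((real n + 1) * (real n + 2)))"
      by simp
    finally show ?thesis unfolding e .
  qed
  have nn: "0 \<le> 1 / q (Suc n)" for n using qp[of "Suc n"] by simp
  show sm: "summable (\<lambda>n. 1 / q (Suc n))"
    by (rule summable_comparison_test[OF _ sums_summable[OF tel2]]) (use cmp nn in auto)
  show "(\<Sum>n. 1 / q (Suc n)) \<le> 1 / \<kappa>"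
    using sums_le[OF cmp summable_sums[OF sm] tel2] .
  show "summable (\<lambda>n. 1 / q n)" using sm summable_Suc_iff[of "\<lambda>n. 1 / q n"] by simp
qed


theorem corollary2p5:
  fixes J :: "'a::{real_inner, complete_space} \<Rightarrow> 'a"
    and T :: "'a \<Rightarrow> 'a"
  assumes "complex_structure J"
    and "complex_bounded_operator J T"
    and "power_bounded T"
  shows "\<exists>V S. l2_operator J S \<and> l2_lifting J T V S \<and> three_isometric S
                \<and> l2_expansive S \<and> l2_analytic S"
proof -
  have blJ: "bounded_linear J" and JJ: "\<And>x. J (J x) = - x" and Jn: "\<And>x. norm (J x) = norm x"
    using assms(1) unfolding complex_structure_def by auto
  have blT: "bounded_linear T" and TJ: "\<And>x. T (J x) = J (T x)"
    using assms(2) unfolding complex_bounded_operator_def by auto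
  obtain M0 where M0: "\<And>n. onorm (T ^^ n) \<le> M0"
    using assms(3) unfolding power_bounded_def bdd_above_def by blast
  define M where "M = max M0 1"
  have Mge: "M \<ge> 1" unfolding M_def by simp
  have TM: "norm ((T ^^ n) x) \<le> M * norm x" for n x
  proof -
    have "norm ((T ^^ n) x) \<le> onorm (T ^^ n) * norm x" by (rule onorm[OF funpow_bl[OF blT]])
    also have "\<dots> \<le> M * norm x" using M0[of n] unfolding M_def by (intro mult_right_mono) auto
    finally show ?thesis .
  qed
  define A where "A = adjop T"
  have blA: "bounded_linear A" unfolding A_def by (rule adjop_bl[OF blT])
  have adj: "\<And>x y. inner (T x) y = inner x (A y)" unfolding A_def by (rule adjop_inner[OF blT])
  have Jlin: "linear J" using blJ by (rule bounded_linear.linear)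
  have JJinner: "inner (J a) (J b) = inner a b" for a b
  proof -
    have "(norm (J (a + b)))\<^sup>2 = (norm (a + b))\<^sup>2" by (simp add: Jn)
    then have "inner (J a + J b) (J a + J b) = inner (a + b) (a + b)"
      by (simp add: linear_add[OF Jlin] power2_norm_eq_inner)
    moreover have "inner (J a) (J a) = inner a a" "inner (J b) (J b) = inner b b"
      using Jn[of a] Jn[of b] by (simp_all add: power2_norm_eq_inner[symmetric])
    ultimately show ?thesis by (simp add: inner_add_left inner_add_right inner_commute)
  qed
  have Jskew: "inner (J a) b = - inner a (J b)" for a b
  proof -
    have "inner (J a) b = inner (J (J a)) (J b)" by (simp add: JJinner)
    also have "\<dots> = - inner a (J b)" by (simp add: JJ)
    finally show ?thesis .
  qed
  have AJ: "A (J x) = J (A x)" for x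
  proof (rule inner_eq_imp_eq)
    fix y
    have "inner y (A (J x)) = inner (T y) (J x)" by (simp add: adj)
    also have "\<dots> = - inner (J (T y)) x" by (simp add: Jskew)
    also have "\<dots> = - inner (T (J y)) x" by (simp add: TJ)
    also have "\<dots> = - inner (J y) (A x)" by (simp add: adj)
    also have "\<dots> = inner y (J (A x))" by (simp add: Jskew)
    finally show "inner y (A (J x)) = inner y (J (A x))" .
  qed
  have AM: "norm ((A ^^ n) x) \<le> M * norm x" for n x
    by (rule adj_bound_gen[OF adjop_pow_inner[OF adj] TM]) (use Mge in simp)
  define \<kappa> where "\<kappa> = 10 * M\<^sup>2 + 1"
  have k1: "\<kappa> \<ge> 1" unfolding \<kappa>_def by simp
  define q where "q = (\<lambda>n::nat. 1 + \<kappa> * real n * (real n + 1))"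
  have qdef: "\<And>n. q n = 1 + \<kappa> * real n * (real n + 1)" unfolding q_def by simp
  note qf = q_facts[OF k1 qdef]
  have small: "M\<^sup>2 * (\<Sum>n. 1 / q (Suc n)) \<le> 1/10"
  proof -
    have "M\<^sup>2 * (\<Sum>n. 1 / q (Suc n)) \<le> M\<^sup>2 * (1 / \<kappa>)" using qf(7) by (intro mult_left_mono) auto
    also have "\<dots> \<le> 1/10"
    proof -
      have kp: "\<kappa> > 0" using k1 by simp
      have "M\<^sup>2 \<le> 1/10 * \<kappa>" unfolding \<kappa>_def by simp
      then have "M\<^sup>2 / \<kappa> \<le> 1/10" using kp by (simp add: pos_divide_le_eq)
      then show ?thesis by simp
    qed
    finally show ?thesis .
  qed
  have M0': "M \<ge> 0" using Mge by simp
  obtain D where D: "sa D" "cJ J D" "\<And>h. (\<lambda>n. (1 / q n) *\<^sub>R (T ^^ n) (D (D ((A ^^ n) h)))) sums h"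
    using D_exists[OF blT blA blJ adj TJ AJ TM AM M0' qf(1) qf(2) qf(6) small] by blast
  define S :: "(nat \<Rightarrow> 'a) \<Rightarrow> nat \<Rightarrow> 'a" where "S = Sw (wq q)"
  define V where "V = Vm A D q"
  have wb: "\<And>n. \<bar>wq q n\<bar> \<le> sqrt (3 + 2 * \<kappa>)"
    by (rule wq_bd[OF qf(1) qf(3) qf(4) qf(5)])
  have "l2_operator J S" unfolding S_def by (rule Sw_operator[OF qf(1) qf(3) qf(4) qf(5) blJ])
  moreover have "l2_lifting J T V S" unfolding S_def V_def
    by (rule lifting_V[OF blT blA blJ adj TJ AJ TM AM M0' qf(1) qf(8) D wb])
  moreover have "three_isometric S" unfolding S_def by (rule Sw_three_isometric[OF qf(1) qf(3) qf(4) qf(5)])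
  moreover have "l2_expansive S" unfolding S_def by (rule Sw_expansive[OF qf(1) qf(3) qf(4) qf(5)])
  moreover have "l2_analytic S" unfolding S_def by (rule Sw_analytic[OF qf(1) qf(3) qf(4) qf(5)])
  ultimately show ?thesis by blast
qed

end
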